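(* Let $A$ be an associative unital algebra and $(H,\pi,\psi)$ a left twisting datum for $A$. Let $A^H=\{a\in A: h\cdot a=\varepsilon(h)a\ \forall h\in H\}$ and $A^{co(H)}=\{a\in A: a_{(-1)}\otimes a_{(0)}=1\otimes a\}$. Then $A^H$ is a subalgebra which is a left $H$-comodule algebra (by restricting $\psi$) and $A^{co(H)}$ is a subalgebra which is a left $H$-module algebra (by restricting $\pi$). If moreover $ab=ba$ for all $a\in A^{co(H)}$ and $b\in A^H$, then the map $A^{co(H)}\blacktriangleright\!\!<A^H\to(A,\star)$, $a\blacktriangleright\!\!<b\mapsto ab$, is an algebra map.
   Context: Work over a field $k$; $H$ a bialgebra, $\Delta(h)=h_1\otimes h_2$. A left twisting datum $(H,\pi,\psi)$ for $A$: $A$ is a left $H$-module algebra ($\pi(h\otimes a)=h\cdot a$, $h\cdot(ab)=(h_1\cdot a)(h_2\cdot b)$, $h\cdot1=\varepsilon(h)1$) and a left $H$-comodule algebra ($\psi(a)=a_{(-1)}\otimes a_{(0)}$ an algebra map) with $(h\cdot a)_{(-1)}\otimes(h\cdot a)_{(0)}=a_{(-1)}\otimes h\cdot a_{(0)}$; the left twisted product is $a\star b=a_{(0)}(a_{(-1)}\cdot b)$. For a left $H$-module algebra $M$ and left $H$-comodule algebra $N$ (coaction $n\mapsto n_{(-1)}\otimes n_{(0)}$), the generalized smash product $M\blacktriangleright\!\!<N$ is $M\otimes N$ with product $(m\blacktriangleright\!\!<n)(m'\blacktriangleright\!\!<n')=m(n_{(-1)}\cdot m')\blacktriangleright\!\!<n_{(0)}n'$.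 *)

theory Defs
  imports Main "HOL.Vector_Spaces"
begin

text \<open>An element of a tensor product V (x) W is represented by a finite list of
pairs (v_i, w_i), standing for the sum of the v_i (x) w_i.  Two such lists
represent the same tensor iff the difference of their formal sums in the free
k-vector space on V x W lies in the k-span of the bilinearity relations.
Vector spaces are subsets (carriers) of types carrying a k-scalar action.\<close>

definition delta :: "'p \<Rightarrow> 'p \<Rightarrow> 'k::field" where
  "delta p = (\<lambda>q. if q = p then 1 else 0)"

definition fsum :: "'p list \<Rightarrow> 'p \<Rightarrow> 'k::field" where
  "fsum xs = (\<lambda>q. \<Sum>p\<leftarrow>xs. delta p q)"

definition lin_span :: "('p \<Rightarrow> 'k::field) set \<Rightarrow> ('p \<Rightarrow> 'k) set" where
  "lin_span R = {f. \<exists>cs. snd ` set cs \<subseteq> R \<and> f = (\<lambda>q. \<Sum>(c, r)\<leftarrow>cs. c * r q)}"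

definition rel2 :: "('k::field \<Rightarrow> 'v::ab_group_add \<Rightarrow> 'v) \<Rightarrow> ('k \<Rightarrow> 'w::ab_group_add \<Rightarrow> 'w)
    \<Rightarrow> 'v set \<Rightarrow> 'w set \<Rightarrow> ('v \<times> 'w \<Rightarrow> 'k) set" where
  "rel2 sV sW V W =
     {\<lambda>q. delta (v + v', w) q - delta (v, w) q - delta (v', w) q | v v' w. v \<in> V \<and> v' \<in> V \<and> w \<in> W}
   \<union> {\<lambda>q. delta (v, w + w') q - delta (v, w) q - delta (v, w') q | v w w'. v \<in> V \<and> w \<in> W \<and> w' \<in> W}
   \<union> {\<lambda>q. delta (sV c v, w) q - c * delta (v, w) q | c v w. v \<in> V \<and> w \<in> W}
   \<union> {\<lambda>q. delta (v, sW c w) q - c * delta (v, w) q | c v w. v \<in> V \<and> w \<in> W}"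

definition tensor2_eq :: "('k::field \<Rightarrow> 'v::ab_group_add \<Rightarrow> 'v) \<Rightarrow> ('k \<Rightarrow> 'w::ab_group_add \<Rightarrow> 'w)
    \<Rightarrow> 'v set \<Rightarrow> 'w set \<Rightarrow> ('v \<times> 'w) list \<Rightarrow> ('v \<times> 'w) list \<Rightarrow> bool" where
  "tensor2_eq sV sW V W xs ys \<longleftrightarrow>
     set xs \<subseteq> V \<times> W \<and> set ys \<subseteq> V \<times> W \<and>
     (\<lambda>q. fsum xs q - fsum ys q) \<in> lin_span (rel2 sV sW V W)"

definition rel3 :: "('k::field \<Rightarrow> 'u::ab_group_add \<Rightarrow> 'u) \<Rightarrow> ('k \<Rightarrow> 'v::ab_group_add \<Rightarrow> 'v)
    \<Rightarrow> ('k \<Rightarrow> 'w::ab_group_add \<Rightarrow> 'w) \<Rightarrow> 'u set \<Rightarrow> 'v set \<Rightarrow> 'w set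
    \<Rightarrow> ('u \<times> 'v \<times> 'w \<Rightarrow> 'k) set" where
  "rel3 sU sV sW U V W =
     {\<lambda>q. delta (u + u', v, w) q - delta (u, v, w) q - delta (u', v, w) q
        | u u' v w. u \<in> U \<and> u' \<in> U \<and> v \<in> V \<and> w \<in> W}
   \<union> {\<lambda>q. delta (u, v + v', w) q - delta (u, v, w) q - delta (u, v', w) q
        | u v v' w. u \<in> U \<and> v \<in> V \<and> v' \<in> V \<and> w \<in> W}
   \<union> {\<lambda>q. delta (u, v, w + w') q - delta (u, v, w) q - delta (u, v, w') q
        | u v w w'. u \<in> U \<and> v \<in> V \<and> w \<in> W \<and> w' \<in> W}
   \<union> {\<lambda>q. delta (sU c u, v, w) q - c * delta (u, v, w) q | c u v w. u \<in> U \<and> v \<in> V \<and> w \<in> W}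
   \<union> {\<lambda>q. delta (u, sV c v, w) q - c * delta (u, v, w) q | c u v w. u \<in> U \<and> v \<in> V \<and> w \<in> W}
   \<union> {\<lambda>q. delta (u, v, sW c w) q - c * delta (u, v, w) q | c u v w. u \<in> U \<and> v \<in> V \<and> w \<in> W}"

definition tensor3_eq :: "('k::field \<Rightarrow> 'u::ab_group_add \<Rightarrow> 'u) \<Rightarrow> ('k \<Rightarrow> 'v::ab_group_add \<Rightarrow> 'v)
    \<Rightarrow> ('k \<Rightarrow> 'w::ab_group_add \<Rightarrow> 'w) \<Rightarrow> 'u set \<Rightarrow> 'v set \<Rightarrow> 'w set
    \<Rightarrow> ('u \<times> 'v \<times> 'w) list \<Rightarrow> ('u \<times> 'v \<times> 'w) list \<Rightarrow> bool" where
  "tensor3_eq sU sV sW U V W xs ys \<longleftrightarrow>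
     set xs \<subseteq> U \<times> V \<times> W \<and> set ys \<subseteq> U \<times> V \<times> W \<and>
     (\<lambda>q. fsum xs q - fsum ys q) \<in> lin_span (rel3 sU sV sW U V W)"

definition k_algebra :: "('k::field \<Rightarrow> 'r::ring_1 \<Rightarrow> 'r) \<Rightarrow> bool" where
  "k_algebra s \<longleftrightarrow> vector_space s \<and> (\<forall>c x y. s c (x * y) = s c x * y \<and> s c (x * y) = x * s c y)"

definition subalgebra :: "('k::field \<Rightarrow> 'r::ring_1 \<Rightarrow> 'r) \<Rightarrow> 'r set \<Rightarrow> bool" where
  "subalgebra s S \<longleftrightarrow> 0 \<in> S \<and> 1 \<in> S \<and> (\<forall>x\<in>S. \<forall>y\<in>S. x + y \<in> S \<and> x * y \<in> S) \<and>
     (\<forall>c. \<forall>x\<in>S. s c x \<in> S)"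

text \<open>Bialgebra (H, Delta, epsilon); Delta h is a list of pairs representing
h_1 (x) h_2 in H (x) H.\<close>
definition bialgebra :: "('k::field \<Rightarrow> 'h::ring_1 \<Rightarrow> 'h) \<Rightarrow> ('h \<Rightarrow> ('h \<times> 'h) list) \<Rightarrow> ('h \<Rightarrow> 'k) \<Rightarrow> bool" where
  "bialgebra sH \<Delta> \<epsilon> \<longleftrightarrow> k_algebra sH \<and>
     (\<forall>x y. tensor2_eq sH sH UNIV UNIV (\<Delta> (x + y)) (\<Delta> x @ \<Delta> y)) \<and>
     (\<forall>c x. tensor2_eq sH sH UNIV UNIV (\<Delta> (sH c x)) (map (\<lambda>(a, b). (sH c a, b)) (\<Delta> x))) \<and>
     (\<forall>x y. \<epsilon> (x + y) = \<epsilon> x + \<epsilon> y) \<and> (\<forall>c x. \<epsilon> (sH c x) = c * \<epsilon> x) \<and>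
     (\<forall>h. tensor3_eq sH sH sH UNIV UNIV UNIV
            [(a1, a2, b). (a, b) \<leftarrow> \<Delta> h, (a1, a2) \<leftarrow> \<Delta> a]
            [(a, b1, b2). (a, b) \<leftarrow> \<Delta> h, (b1, b2) \<leftarrow> \<Delta> b]) \<and>
     (\<forall>h. (\<Sum>(a, b)\<leftarrow>\<Delta> h. sH (\<epsilon> a) b) = h) \<and>
     (\<forall>h. (\<Sum>(a, b)\<leftarrow>\<Delta> h. sH (\<epsilon> b) a) = h) \<and>
     (\<forall>x y. tensor2_eq sH sH UNIV UNIV (\<Delta> (x * y)) [(a * c, b * d). (a, b) \<leftarrow> \<Delta> x, (c, d) \<leftarrow> \<Delta> y]) \<and>
     tensor2_eq sH sH UNIV UNIV (\<Delta> 1) [(1, 1)] \<and>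
     (\<forall>x y. \<epsilon> (x * y) = \<epsilon> x * \<epsilon> y) \<and> \<epsilon> 1 = 1"

definition module_algebra :: "('k::field \<Rightarrow> 'h::ring_1 \<Rightarrow> 'h) \<Rightarrow> ('h \<Rightarrow> ('h \<times> 'h) list) \<Rightarrow> ('h \<Rightarrow> 'k)
    \<Rightarrow> ('k \<Rightarrow> 'a::ring_1 \<Rightarrow> 'a) \<Rightarrow> 'a set \<Rightarrow> ('h \<Rightarrow> 'a \<Rightarrow> 'a) \<Rightarrow> bool" where
  "module_algebra sH \<Delta> \<epsilon> sA M \<pi> \<longleftrightarrow>
     (\<forall>h. \<forall>m\<in>M. \<pi> h m \<in> M) \<and>
     (\<forall>h g. \<forall>m\<in>M. \<pi> (h + g) m = \<pi> h m + \<pi> g m) \<and>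
     (\<forall>c h. \<forall>m\<in>M. \<pi> (sH c h) m = sA c (\<pi> h m)) \<and>
     (\<forall>h. \<forall>m\<in>M. \<forall>n\<in>M. \<pi> h (m + n) = \<pi> h m + \<pi> h n) \<and>
     (\<forall>h c. \<forall>m\<in>M. \<pi> h (sA c m) = sA c (\<pi> h m)) \<and>
     (\<forall>m\<in>M. \<pi> 1 m = m) \<and>
     (\<forall>h g. \<forall>m\<in>M. \<pi> (h * g) m = \<pi> h (\<pi> g m)) \<and>
     (\<forall>h. \<forall>m\<in>M. \<forall>n\<in>M. \<pi> h (m * n) = (\<Sum>(h1, h2)\<leftarrow>\<Delta> h. \<pi> h1 m * \<pi> h2 n)) \<and>
     (\<forall>h. \<pi> h 1 = sA (\<epsilon> h) 1)"

text \<open>N (a subset of A) is a left H-comodule algebra via psi; psi n is a list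
of pairs representing n_(-1) (x) n_(0) in H (x) N.\<close>
definition comodule_algebra :: "('k::field \<Rightarrow> 'h::ring_1 \<Rightarrow> 'h) \<Rightarrow> ('h \<Rightarrow> ('h \<times> 'h) list) \<Rightarrow> ('h \<Rightarrow> 'k)
    \<Rightarrow> ('k \<Rightarrow> 'a::ring_1 \<Rightarrow> 'a) \<Rightarrow> 'a set \<Rightarrow> ('a \<Rightarrow> ('h \<times> 'a) list) \<Rightarrow> bool" where
  "comodule_algebra sH \<Delta> \<epsilon> sA N \<psi> \<longleftrightarrow>
     (\<forall>n\<in>N. set (\<psi> n) \<subseteq> UNIV \<times> N) \<and>
     (\<forall>m\<in>N. \<forall>n\<in>N. tensor2_eq sH sA UNIV N (\<psi> (m + n)) (\<psi> m @ \<psi> n)) \<and>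
     (\<forall>c. \<forall>n\<in>N. tensor2_eq sH sA UNIV N (\<psi> (sA c n)) (map (\<lambda>(h, a). (sH c h, a)) (\<psi> n))) \<and>
     (\<forall>n\<in>N. tensor3_eq sH sH sA UNIV UNIV N
            [(h, g, b). (h, a) \<leftarrow> \<psi> n, (g, b) \<leftarrow> \<psi> a]
            [(h1, h2, a). (h, a) \<leftarrow> \<psi> n, (h1, h2) \<leftarrow> \<Delta> h]) \<and>
     (\<forall>n\<in>N. (\<Sum>(h, a)\<leftarrow>\<psi> n. sA (\<epsilon> h) a) = n) \<and>
     (\<forall>m\<in>N. \<forall>n\<in>N. tensor2_eq sH sA UNIV N (\<psi> (m * n)) [(h * g, a * b). (h, a) \<leftarrow> \<psi> m, (g, b) \<leftarrow> \<psi> n]) \<and>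
     tensor2_eq sH sA UNIV N (\<psi> 1) [(1, 1)]"

definition left_twisting_datum :: "('k::field \<Rightarrow> 'h::ring_1 \<Rightarrow> 'h) \<Rightarrow> ('h \<Rightarrow> ('h \<times> 'h) list) \<Rightarrow> ('h \<Rightarrow> 'k)
    \<Rightarrow> ('k \<Rightarrow> 'a::ring_1 \<Rightarrow> 'a) \<Rightarrow> ('h \<Rightarrow> 'a \<Rightarrow> 'a) \<Rightarrow> ('a \<Rightarrow> ('h \<times> 'a) list) \<Rightarrow> bool" where
  "left_twisting_datum sH \<Delta> \<epsilon> sA \<pi> \<psi> \<longleftrightarrow>
     bialgebra sH \<Delta> \<epsilon> \<and> k_algebra sA \<and>
     module_algebra sH \<Delta> \<epsilon> sA UNIV \<pi> \<and> comodule_algebra sH \<Delta> \<epsilon> sA UNIV \<psi> \<and>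
     (\<forall>h a. tensor2_eq sH sA UNIV UNIV (\<psi> (\<pi> h a)) [(g, \<pi> h b). (g, b) \<leftarrow> \<psi> a])"

definition invariants :: "('k::field \<Rightarrow> 'a \<Rightarrow> 'a) \<Rightarrow> ('h \<Rightarrow> 'k) \<Rightarrow> ('h \<Rightarrow> 'a \<Rightarrow> 'a) \<Rightarrow> 'a set" where
  "invariants sA \<epsilon> \<pi> = {a. \<forall>h. \<pi> h a = sA (\<epsilon> h) a}"

definition coinvariants :: "('k::field \<Rightarrow> 'h::ring_1 \<Rightarrow> 'h) \<Rightarrow> ('k \<Rightarrow> 'a::ab_group_add \<Rightarrow> 'a)
    \<Rightarrow> ('a \<Rightarrow> ('h \<times> 'a) list) \<Rightarrow> 'a set" where
  "coinvariants sH sA \<psi> = {a. tensor2_eq sH sA UNIV UNIV (\<psi> a) [(1, a)]}"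

definition twisted_prod :: "('h \<Rightarrow> 'a::ring_1 \<Rightarrow> 'a) \<Rightarrow> ('a \<Rightarrow> ('h \<times> 'a) list) \<Rightarrow> 'a \<Rightarrow> 'a \<Rightarrow> 'a" where
  "twisted_prod \<pi> \<psi> a b = (\<Sum>(g, c)\<leftarrow>\<psi> a. c * \<pi> g b)"

definition smash_mult :: "('h \<Rightarrow> 'a::ring_1 \<Rightarrow> 'a) \<Rightarrow> ('a \<Rightarrow> ('h \<times> 'a) list)
    \<Rightarrow> ('a \<times> 'a) list \<Rightarrow> ('a \<times> 'a) list \<Rightarrow> ('a \<times> 'a) list" where
  "smash_mult \<pi> \<psi> xs ys =
     concat [[(m * \<pi> g m', c * n'). (g, c) \<leftarrow> \<psi> n]. (m, n) \<leftarrow> xs, (m', n') \<leftarrow> ys]"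

definition mult_map :: "('a::ring_1 \<times> 'a) list \<Rightarrow> 'a" where
  "mult_map xs = (\<Sum>(m, n)\<leftarrow>xs. m * n)"

end

theory Submission
  imports Defs "HOL-Library.Function_Algebras"
begin

definition supp :: "('p \<Rightarrow> 'k::zero) \<Rightarrow> 'p set" where "supp f = {p. f p \<noteq> 0}"

definition Ev :: "('k \<Rightarrow> 'b \<Rightarrow> 'b) \<Rightarrow> ('p \<Rightarrow> 'b) \<Rightarrow> 'p set \<Rightarrow> ('p \<Rightarrow> 'k) \<Rightarrow> 'b::comm_monoid_add" where
  "Ev s B S f = (\<Sum>p\<in>S. s (f p) (B p))"

lemma fsum_Nil[simp]: "fsum [] = (\<lambda>q. 0)" by (simp add: fsum_def)
lemma fsum_Cons: "fsum (x#xs) = (\<lambda>q. delta x q + fsum xs q)" by (simp add: fsum_def)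
lemma fsum_append: "fsum (xs@ys) = (\<lambda>q. fsum xs q + fsum ys q)" by (simp add: fsum_def)

context vector_space begin

lemma Ev_delta: "finite S \<Longrightarrow> x \<in> S \<Longrightarrow> Ev scale B S (delta x) = B x"
  unfolding Ev_def delta_def
  by (simp add: if_distrib[of "\<lambda>c. scale c _"] cong: if_cong)

lemma Ev_add: "Ev scale B S (\<lambda>q. f q + g q) = Ev scale B S f + Ev scale B S g"
  unfolding Ev_def by (simp add: scale_left_distrib sum.distrib)

lemma Ev_diff: "Ev scale B S (\<lambda>q. f q - g q) = Ev scale B S f - Ev scale B S g"
  unfolding Ev_def by (simp add: scale_left_diff_distrib sum_subtractf)

lemma Ev_cmul: "Ev scale B S (\<lambda>q. c * f q) = scale c (Ev scale B S f)"
  unfolding Ev_def by (simp add: scale_sum_right)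

lemma Ev_zero: "Ev scale B S (\<lambda>q. 0) = 0"
  unfolding Ev_def by simp

lemma Ev_lincomb: "Ev scale B S (\<lambda>q. \<Sum>(c, r)\<leftarrow>cs. c * r q) = (\<Sum>(c, r)\<leftarrow>cs. scale c (Ev scale B S r))"
proof (induction cs)
  case Nil then show ?case by (simp add: Ev_zero)
next
  case (Cons a cs)
  obtain c r where a: "a = (c, r)" by force
  have "Ev scale B S (\<lambda>q. \<Sum>(c, r)\<leftarrow>a#cs. c * r q) = Ev scale B S (\<lambda>q. c * r q + (\<Sum>(c, r)\<leftarrow>cs. c * r q))"
    by (simp add: a)
  also have "\<dots> = scale c (Ev scale B S r) + Ev scale B S (\<lambda>q. \<Sum>(c, r)\<leftarrow>cs. c * r q)"
    by (simp add: Ev_add Ev_cmul)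
  finally show ?case using Cons by (simp add: a)
qed

lemma Ev_fsum: "finite S \<Longrightarrow> set xs \<subseteq> S \<Longrightarrow> Ev scale B S (fsum xs) = (\<Sum>p\<leftarrow>xs. B p)"
proof (induction xs)
  case Nil then show ?case by (simp add: Ev_zero)
next
  case (Cons x xs)
  then show ?case by (simp add: fsum_Cons Ev_add Ev_delta)
qed

lemma Ev_extend: "finite T \<Longrightarrow> supp f \<subseteq> S \<Longrightarrow> S \<subseteq> T \<Longrightarrow> Ev scale B T f = Ev scale B S f"
  unfolding Ev_def supp_def
  by (rule sum.mono_neutral_right) (auto)

lemma span_hom:
  assumes P: "subspace P"
    and R: "\<And>r S. r \<in> R \<Longrightarrow> finite S \<Longrightarrow> supp r \<subseteq> S \<Longrightarrow> Ev scale B S r \<in> P"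
    and Rf: "\<And>r. r \<in> R \<Longrightarrow> finite (supp r)"
    and L: "(\<lambda>q. fsum xs q - fsum ys q) \<in> lin_span R"
  shows "(\<Sum>p\<leftarrow>xs. B p) - (\<Sum>p\<leftarrow>ys. B p) \<in> P"
proof -
  obtain cs where cs: "snd ` set cs \<subseteq> R" "(\<lambda>q. fsum xs q - fsum ys q) = (\<lambda>q. \<Sum>(c, r)\<leftarrow>cs. c * r q)"
    using L unfolding lin_span_def by blast
  define S where "S = set xs \<union> set ys \<union> (\<Union>r\<in>snd ` set cs. supp r)"
  have fS: "finite S" unfolding S_def using cs(1) Rf by auto
  have "(\<Sum>p\<leftarrow>xs. B p) - (\<Sum>p\<leftarrow>ys. B p) = Ev scale B S (\<lambda>q. fsum xs q - fsum ys q)"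
  proof -
    have "set xs \<subseteq> S" "set ys \<subseteq> S" unfolding S_def by auto
    then show ?thesis using Ev_fsum[OF fS, of xs B] Ev_fsum[OF fS, of ys B] by (simp add: Ev_diff)
  qed
  also have "\<dots> = (\<Sum>(c, r)\<leftarrow>cs. scale c (Ev scale B S r))"
    by (simp add: cs(2) Ev_lincomb)
  also have "\<dots> \<in> P"
  proof -
    have "\<forall>a\<in>set cs. (case a of (c, r) \<Rightarrow> scale c (Ev scale B S r)) \<in> P"
    proof
      fix a assume a: "a \<in> set cs"
      obtain c r where ac: "a = (c, r)" by force
      have "r \<in> R" using a ac cs(1) by force
      moreover have "supp r \<subseteq> S" using a ac unfolding S_def by force
      ultimately have "Ev scale B S r \<in> P" using R fS by blast
      then show "(case a of (c, r) \<Rightarrow> scale c (Ev scale B S r)) \<in> P"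
        using ac P by (simp add: subspace_scale)
    qed
    then show ?thesis
    proof (induction cs)
      case Nil then show ?case using P by (simp add: subspace_0)
    next
      case (Cons a cs) then show ?case using P by (simp add: subspace_add)
    qed
  qed
  finally show ?thesis .
qed

lemma supp3: "supp (\<lambda>q. delta a q - delta b q - delta c q :: 'k::field) \<subseteq> {a, b, c}"
  unfolding supp_def delta_def by auto

lemma supp2: "supp (\<lambda>q. delta a q - (d::'k::field) * delta b q) \<subseteq> {a, b}"
  unfolding supp_def delta_def by auto

lemma Ev3: "finite S \<Longrightarrow> supp (\<lambda>q. delta a q - delta b q - delta c q :: 'a) \<subseteq> S \<Longrightarrow>
  Ev scale B S (\<lambda>q. delta a q - delta b q - delta c q) = B a - B b - B c"
proof -
  assume S: "finite S" "supp (\<lambda>q. delta a q - delta b q - delta c q :: 'a) \<subseteq> S"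
  let ?T = "S \<union> {a, b, c}"
  have "Ev scale B S (\<lambda>q. delta a q - delta b q - delta c q) = Ev scale B ?T (\<lambda>q. delta a q - delta b q - delta c q)"
    by (rule Ev_extend[symmetric]) (use S in auto)
  also have "\<dots> = B a - B b - B c"
    using S by (simp add: Ev_diff[where f="\<lambda>q. delta a q - delta b q"] Ev_diff Ev_delta
      del: Ev_diff[where f="\<lambda>q. delta a q"])
  finally show ?thesis .
qed

lemma Ev2: "finite S \<Longrightarrow> supp (\<lambda>q. delta a q - d * delta b q) \<subseteq> S \<Longrightarrow>
  Ev scale B S (\<lambda>q. delta a q - d * delta b q) = B a - scale d (B b)"
proof -
  assume S: "finite S" "supp (\<lambda>q. delta a q - d * delta b q) \<subseteq> S"
  let ?T = "S \<union> {a, b}"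
  have "Ev scale B S (\<lambda>q. delta a q - d * delta b q) = Ev scale B ?T (\<lambda>q. delta a q - d * delta b q)"
    by (rule Ev_extend[symmetric]) (use S in auto)
  also have "\<dots> = B a - scale d (B b)"
    using S by (simp add: Ev_diff Ev_cmul[where f="delta b"] Ev_delta)
  finally show ?thesis .
qed

lemma rel2_span_hom:
  assumes P: "subspace P"
    and b1: "\<And>v v' w. v \<in> V \<Longrightarrow> v' \<in> V \<Longrightarrow> w \<in> W \<Longrightarrow> B (v + v', w) - B (v, w) - B (v', w) \<in> P"
    and b2: "\<And>v w w'. v \<in> V \<Longrightarrow> w \<in> W \<Longrightarrow> w' \<in> W \<Longrightarrow> B (v, w + w') - B (v, w) - B (v, w') \<in> P"
    and b3: "\<And>c v w. v \<in> V \<Longrightarrow> w \<in> W \<Longrightarrow> B (sV c v, w) - scale c (B (v, w)) \<in> P"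
    and b4: "\<And>c v w. v \<in> V \<Longrightarrow> w \<in> W \<Longrightarrow> B (v, sW c w) - scale c (B (v, w)) \<in> P"
    and T: "tensor2_eq sV sW V W xs ys"
  shows "(\<Sum>p\<leftarrow>xs. B p) - (\<Sum>p\<leftarrow>ys. B p) \<in> P"
proof (rule span_hom[OF P])
  show "(\<lambda>q. fsum xs q - fsum ys q) \<in> lin_span (rel2 sV sW V W)" using T unfolding tensor2_eq_def by blast
  show "Ev (*s) B S r \<in> P" if "r \<in> rel2 sV sW V W" "finite S" "supp r \<subseteq> S" for r S
    using that unfolding rel2_def by (auto simp: Ev3 Ev2 b1 b2 b3 b4)
  show "finite (supp r)" if "r \<in> rel2 sV sW V W" for r
    using that unfolding rel2_def by (auto intro: finite_subset[OF supp3] finite_subset[OF supp2])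
qed

lemma rel3_span_hom:
  assumes P: "subspace P"
    and b1: "\<And>u u' v w. u \<in> U \<Longrightarrow> u' \<in> U \<Longrightarrow> v \<in> V \<Longrightarrow> w \<in> W \<Longrightarrow> B (u + u', v, w) - B (u, v, w) - B (u', v, w) \<in> P"
    and b2: "\<And>u v v' w. u \<in> U \<Longrightarrow> v \<in> V \<Longrightarrow> v' \<in> V \<Longrightarrow> w \<in> W \<Longrightarrow> B (u, v + v', w) - B (u, v, w) - B (u, v', w) \<in> P"
    and b3: "\<And>u v w w'. u \<in> U \<Longrightarrow> v \<in> V \<Longrightarrow> w \<in> W \<Longrightarrow> w' \<in> W \<Longrightarrow> B (u, v, w + w') - B (u, v, w) - B (u, v, w') \<in> P"
    and b4: "\<And>c u v w. u \<in> U \<Longrightarrow> v \<in> V \<Longrightarrow> w \<in> W \<Longrightarrow> B (sU c u, v, w) - scale c (B (u, v, w)) \<in> P"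
    and b5: "\<And>c u v w. u \<in> U \<Longrightarrow> v \<in> V \<Longrightarrow> w \<in> W \<Longrightarrow> B (u, sV c v, w) - scale c (B (u, v, w)) \<in> P"
    and b6: "\<And>c u v w. u \<in> U \<Longrightarrow> v \<in> V \<Longrightarrow> w \<in> W \<Longrightarrow> B (u, v, sW c w) - scale c (B (u, v, w)) \<in> P"
    and T: "tensor3_eq sU sV sW U V W xs ys"
  shows "(\<Sum>p\<leftarrow>xs. B p) - (\<Sum>p\<leftarrow>ys. B p) \<in> P"
proof (rule span_hom[OF P])
  show "(\<lambda>q. fsum xs q - fsum ys q) \<in> lin_span (rel3 sU sV sW U V W)" using T unfolding tensor3_eq_def by blast
  show "Ev (*s) B S r \<in> P" if "r \<in> rel3 sU sV sW U V W" "finite S" "supp r \<subseteq> S" for r S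
    using that unfolding rel3_def by (auto simp: Ev3 Ev2 b1 b2 b3 b4 b5 b6)
  show "finite (supp r)" if "r \<in> rel3 sU sV sW U V W" for r
    using that unfolding rel3_def by (auto intro: finite_subset[OF supp3] finite_subset[OF supp2])
qed


end


definition sc_rel :: "('q \<Rightarrow> 'k::field) set \<Rightarrow> 'k \<Rightarrow> 'q list \<Rightarrow> 'q list \<Rightarrow> bool" where
  "sc_rel R c xs ys \<longleftrightarrow> (\<lambda>q. fsum xs q - c * fsum ys q) \<in> lin_span R"

lemma vs_fun: "vector_space (\<lambda>(c::'k::field) (f::'q \<Rightarrow> 'k). (\<lambda>q. c * f q))"
  by unfold_locales (auto simp: fun_eq_iff algebra_simps)

lemma lin_span_zero: "(\<lambda>q. 0) \<in> lin_span R"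
  unfolding lin_span_def by (rule CollectI, rule exI[of _ "[]"]) auto

lemma lin_span_base: "r \<in> R \<Longrightarrow> r \<in> lin_span R"
  unfolding lin_span_def by (rule CollectI, rule exI[of _ "[(1, r)]"]) auto

lemma lin_span_add: fixes f :: "'q \<Rightarrow> 'k::field" shows "f \<in> lin_span R \<Longrightarrow> g \<in> lin_span R \<Longrightarrow> (\<lambda>q. f q + g q) \<in> lin_span R"
  unfolding lin_span_def
proof (clarify)
  fix cs ds :: "('k \<times> ('q \<Rightarrow> 'k::field)) list" assume "snd ` set cs \<subseteq> R" "snd ` set ds \<subseteq> R"
  then show "\<exists>es. snd ` set es \<subseteq> R \<and> (\<lambda>q. (\<Sum>(c, r)\<leftarrow>cs. c * r q) + (\<Sum>(c, r)\<leftarrow>ds. c * r q)) = (\<lambda>q. \<Sum>(c, r)\<leftarrow>es. c * r q)"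
    by (intro exI[of _ "cs @ ds"]) auto
qed

lemma lin_span_cmul: fixes f :: "'q \<Rightarrow> 'k::field" shows "f \<in> lin_span R \<Longrightarrow> (\<lambda>q. a * f q) \<in> lin_span R"
  unfolding lin_span_def
proof (clarify)
  fix cs :: "('k \<times> ('q \<Rightarrow> 'k::field)) list" assume "snd ` set cs \<subseteq> R"
  moreover have "a * (\<Sum>(c, r)\<leftarrow>cs. c * r q) = (\<Sum>(c, r)\<leftarrow>map (\<lambda>(c, r). (a * c, r)) cs. c * r q)" for q
    by (induction cs) (auto simp: algebra_simps)
  ultimately show "\<exists>es. snd ` set es \<subseteq> R \<and> (\<lambda>q. a * (\<Sum>(c, r)\<leftarrow>cs. c * r q)) = (\<lambda>q. \<Sum>(c, r)\<leftarrow>es. c * r q)"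
    by (intro exI[of _ "map (\<lambda>(c, r). (a * c, r)) cs"]) force
qed

lemma lin_span_neg: "f \<in> lin_span R \<Longrightarrow> (\<lambda>q. - f q) \<in> lin_span R"
  using lin_span_cmul[of f R "-1"] by simp

lemma lin_span_diff: "f \<in> lin_span R \<Longrightarrow> g \<in> lin_span R \<Longrightarrow> (\<lambda>q. f q - g q) \<in> lin_span R"
  using lin_span_add[OF _ lin_span_neg, of f R g] by simp

lemma lin_span_eq: "f \<in> lin_span R \<Longrightarrow> f = g \<Longrightarrow> g \<in> lin_span R" by simp

lemma lin_span_subspace: "module.subspace (\<lambda>(c::'k::field) (f::'q \<Rightarrow> 'k). (\<lambda>q. c * f q)) (lin_span R)"
proof -
  interpret V: vector_space "\<lambda>(c::'k::field) (f::'q \<Rightarrow> 'k). (\<lambda>q. c * f q)" by (rule vs_fun)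
  show ?thesis
  proof (rule V.subspaceI)
    show "0 \<in> lin_span R" using lin_span_zero[of R] by (simp add: zero_fun_def)
    show "x + y \<in> lin_span R" if "x \<in> lin_span R" "y \<in> lin_span R" for x y
      using lin_span_add[OF that] by (simp add: plus_fun_def)
    show "(\<lambda>q. c * x q) \<in> lin_span R" if "x \<in> lin_span R" for c x
      using lin_span_cmul[OF that] .
  qed
qed

lemma fsum_concat: "(\<Sum>p\<leftarrow>xs. fsum (\<phi> p)) = fsum (concat (map \<phi> xs))"
  by (induction xs) (auto simp: fsum_append plus_fun_def zero_fun_def)

lemma sc_rel_fun: "sc_rel R c xs ys \<longleftrightarrow> fsum xs - (\<lambda>q. c * fsum ys q) \<in> lin_span R"
  unfolding sc_rel_def by (simp add: fun_diff_def)

lemma tensor2_map: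
  fixes sV :: "'k::field \<Rightarrow> 'v::ab_group_add \<Rightarrow> 'v" and sW :: "'k \<Rightarrow> 'w::ab_group_add \<Rightarrow> 'w"
    and \<phi> :: "'v \<times> 'w \<Rightarrow> 'q list" and R :: "('q \<Rightarrow> 'k) set"
  assumes b1: "\<And>v v' w. v \<in> V \<Longrightarrow> v' \<in> V \<Longrightarrow> w \<in> W \<Longrightarrow> sc_rel R 1 (\<phi> (v + v', w)) (\<phi> (v, w) @ \<phi> (v', w))"
    and b2: "\<And>v w w'. v \<in> V \<Longrightarrow> w \<in> W \<Longrightarrow> w' \<in> W \<Longrightarrow> sc_rel R 1 (\<phi> (v, w + w')) (\<phi> (v, w) @ \<phi> (v, w'))"
    and b3: "\<And>c v w. v \<in> V \<Longrightarrow> w \<in> W \<Longrightarrow> sc_rel R c (\<phi> (sV c v, w)) (\<phi> (v, w))"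
    and b4: "\<And>c v w. v \<in> V \<Longrightarrow> w \<in> W \<Longrightarrow> sc_rel R c (\<phi> (v, sW c w)) (\<phi> (v, w))"
    and T: "tensor2_eq sV sW V W xs ys"
  shows "sc_rel R 1 (concat (map \<phi> xs)) (concat (map \<phi> ys))"
proof -
  interpret V: vector_space "\<lambda>(c::'k::field) (f::'q \<Rightarrow> 'k). (\<lambda>q. c * f q)" by (rule vs_fun)
  have "(\<Sum>p\<leftarrow>xs. fsum (\<phi> p)) - (\<Sum>p\<leftarrow>ys. fsum (\<phi> p)) \<in> lin_span R"
  proof (rule V.rel2_span_hom[OF lin_span_subspace _ _ _ _ T])
    show "fsum (\<phi> (v + v', w)) - fsum (\<phi> (v, w)) - fsum (\<phi> (v', w)) \<in> lin_span R"
      if "v \<in> V" "v' \<in> V" "w \<in> W" for v v' w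
      using b1[OF that] unfolding sc_rel_def by (simp add: fsum_append fun_eq_iff fun_diff_def algebra_simps)
    show "fsum (\<phi> (v, w + w')) - fsum (\<phi> (v, w)) - fsum (\<phi> (v, w')) \<in> lin_span R"
      if "v \<in> V" "w \<in> W" "w' \<in> W" for v w w'
      using b2[OF that] unfolding sc_rel_def by (simp add: fsum_append fun_eq_iff fun_diff_def algebra_simps)
    show "fsum (\<phi> (sV c v, w)) - (\<lambda>q. c * fsum (\<phi> (v, w)) q) \<in> lin_span R"
      if "v \<in> V" "w \<in> W" for c v w
      using b3[OF that] unfolding sc_rel_fun .
    show "fsum (\<phi> (v, sW c w)) - (\<lambda>q. c * fsum (\<phi> (v, w)) q) \<in> lin_span R"
      if "v \<in> V" "w \<in> W" for c v w
      using b4[OF that] unfolding sc_rel_fun .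
  qed
  then show ?thesis unfolding fsum_concat sc_rel_def by (simp add: fun_diff_def)
qed

lemma tensor3_map:
  fixes sU :: "'k::field \<Rightarrow> 'u::ab_group_add \<Rightarrow> 'u"
    and sV :: "'k \<Rightarrow> 'v::ab_group_add \<Rightarrow> 'v" and sW :: "'k \<Rightarrow> 'w::ab_group_add \<Rightarrow> 'w"
    and \<phi> :: "'u \<times> 'v \<times> 'w \<Rightarrow> 'q list" and R :: "('q \<Rightarrow> 'k) set"
  assumes b1: "\<And>u u' v w. u \<in> U \<Longrightarrow> u' \<in> U \<Longrightarrow> v \<in> V \<Longrightarrow> w \<in> W \<Longrightarrow> sc_rel R 1 (\<phi> (u + u', v, w)) (\<phi> (u, v, w) @ \<phi> (u', v, w))"
    and b2: "\<And>u v v' w. u \<in> U \<Longrightarrow> v \<in> V \<Longrightarrow> v' \<in> V \<Longrightarrow> w \<in> W \<Longrightarrow> sc_rel R 1 (\<phi> (u, v + v', w)) (\<phi> (u, v, w) @ \<phi> (u, v', w))"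
    and b3: "\<And>u v w w'. u \<in> U \<Longrightarrow> v \<in> V \<Longrightarrow> w \<in> W \<Longrightarrow> w' \<in> W \<Longrightarrow> sc_rel R 1 (\<phi> (u, v, w + w')) (\<phi> (u, v, w) @ \<phi> (u, v, w'))"
    and b4: "\<And>c u v w. u \<in> U \<Longrightarrow> v \<in> V \<Longrightarrow> w \<in> W \<Longrightarrow> sc_rel R c (\<phi> (sU c u, v, w)) (\<phi> (u, v, w))"
    and b5: "\<And>c u v w. u \<in> U \<Longrightarrow> v \<in> V \<Longrightarrow> w \<in> W \<Longrightarrow> sc_rel R c (\<phi> (u, sV c v, w)) (\<phi> (u, v, w))"
    and b6: "\<And>c u v w. u \<in> U \<Longrightarrow> v \<in> V \<Longrightarrow> w \<in> W \<Longrightarrow> sc_rel R c (\<phi> (u, v, sW c w)) (\<phi> (u, v, w))"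
    and T: "tensor3_eq sU sV sW U V W xs ys"
  shows "sc_rel R 1 (concat (map \<phi> xs)) (concat (map \<phi> ys))"
proof -
  interpret V: vector_space "\<lambda>(c::'k::field) (f::'q \<Rightarrow> 'k). (\<lambda>q. c * f q)" by (rule vs_fun)
  have "(\<Sum>p\<leftarrow>xs. fsum (\<phi> p)) - (\<Sum>p\<leftarrow>ys. fsum (\<phi> p)) \<in> lin_span R"
  proof (rule V.rel3_span_hom[OF lin_span_subspace _ _ _ _ _ _ T])
    show "fsum (\<phi> (u + u', v, w)) - fsum (\<phi> (u, v, w)) - fsum (\<phi> (u', v, w)) \<in> lin_span R"
      if "u \<in> U" "u' \<in> U" "v \<in> V" "w \<in> W" for u u' v w
      using b1[OF that] unfolding sc_rel_def by (simp add: fsum_append fun_eq_iff fun_diff_def algebra_simps)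
    show "fsum (\<phi> (u, v + v', w)) - fsum (\<phi> (u, v, w)) - fsum (\<phi> (u, v', w)) \<in> lin_span R"
      if "u \<in> U" "v \<in> V" "v' \<in> V" "w \<in> W" for u v v' w
      using b2[OF that] unfolding sc_rel_def by (simp add: fsum_append fun_eq_iff fun_diff_def algebra_simps)
    show "fsum (\<phi> (u, v, w + w')) - fsum (\<phi> (u, v, w)) - fsum (\<phi> (u, v, w')) \<in> lin_span R"
      if "u \<in> U" "v \<in> V" "w \<in> W" "w' \<in> W" for u v w w'
      using b3[OF that] unfolding sc_rel_def by (simp add: fsum_append fun_eq_iff fun_diff_def algebra_simps)
    show "fsum (\<phi> (sU c u, v, w)) - (\<lambda>q. c * fsum (\<phi> (u, v, w)) q) \<in> lin_span R"
      if "u \<in> U" "v \<in> V" "w \<in> W" for c u v w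
      using b4[OF that] unfolding sc_rel_fun .
    show "fsum (\<phi> (u, sV c v, w)) - (\<lambda>q. c * fsum (\<phi> (u, v, w)) q) \<in> lin_span R"
      if "u \<in> U" "v \<in> V" "w \<in> W" for c u v w
      using b5[OF that] unfolding sc_rel_fun .
    show "fsum (\<phi> (u, v, sW c w)) - (\<lambda>q. c * fsum (\<phi> (u, v, w)) q) \<in> lin_span R"
      if "u \<in> U" "v \<in> V" "w \<in> W" for c u v w
      using b6[OF that] unfolding sc_rel_fun .
  qed
  then show ?thesis unfolding fsum_concat sc_rel_def by (simp add: fun_diff_def)
qed

lemma tensor2_functional:
  fixes sV :: "'k::field \<Rightarrow> 'v::ab_group_add \<Rightarrow> 'v" and sW :: "'k \<Rightarrow> 'w::ab_group_add \<Rightarrow> 'w"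
    and B :: "'v \<times> 'w \<Rightarrow> 'b::ab_group_add" and s :: "'k \<Rightarrow> 'b \<Rightarrow> 'b"
  assumes vs: "vector_space s"
    and b1: "\<And>v v' w. v \<in> V \<Longrightarrow> v' \<in> V \<Longrightarrow> w \<in> W \<Longrightarrow> B (v + v', w) = B (v, w) + B (v', w)"
    and b2: "\<And>v w w'. v \<in> V \<Longrightarrow> w \<in> W \<Longrightarrow> w' \<in> W \<Longrightarrow> B (v, w + w') = B (v, w) + B (v, w')"
    and b3: "\<And>c v w. v \<in> V \<Longrightarrow> w \<in> W \<Longrightarrow> B (sV c v, w) = s c (B (v, w))"
    and b4: "\<And>c v w. v \<in> V \<Longrightarrow> w \<in> W \<Longrightarrow> B (v, sW c w) = s c (B (v, w))"
    and T: "tensor2_eq sV sW V W xs ys"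
  shows "(\<Sum>p\<leftarrow>xs. B p) = (\<Sum>p\<leftarrow>ys. B p)"
proof -
  interpret V: vector_space s by (rule vs)
  have "(\<Sum>p\<leftarrow>xs. B p) - (\<Sum>p\<leftarrow>ys. B p) \<in> {0}"
    by (rule V.rel2_span_hom[OF V.subspace_single_0 _ _ _ _ T]) (simp_all add: b1 b2 b3 b4)
  then show ?thesis by simp
qed


lemma sc_rel_fsumL: fixes R :: "('q \<Rightarrow> 'k::field) set" shows "(fsum xs :: 'q \<Rightarrow> 'k) = fsum xs' \<Longrightarrow> sc_rel R c xs' ys \<Longrightarrow> sc_rel R c xs ys"
  unfolding sc_rel_def by (erule ssubst)

lemma sc_rel_fsumR: fixes R :: "('q \<Rightarrow> 'k::field) set" shows "(fsum ys :: 'q \<Rightarrow> 'k) = fsum ys' \<Longrightarrow> sc_rel R c xs ys' \<Longrightarrow> sc_rel R c xs ys"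
  unfolding sc_rel_def by (erule ssubst)

lemma sc_rel_refl: "sc_rel R 1 xs xs"
  unfolding sc_rel_def using lin_span_zero by simp

lemma sc_rel_Nil: "sc_rel R c [] []"
  unfolding sc_rel_def using lin_span_zero by simp

lemma sc_rel_trans: "sc_rel R c xs ys \<Longrightarrow> sc_rel R d ys zs \<Longrightarrow> sc_rel R (c * d) xs zs"
  unfolding sc_rel_def
proof -
  assume a: "(\<lambda>q. fsum xs q - c * fsum ys q) \<in> lin_span R" and b: "(\<lambda>q. fsum ys q - d * fsum zs q) \<in> lin_span R"
  have "(\<lambda>q. (fsum xs q - c * fsum ys q) + c * (fsum ys q - d * fsum zs q)) \<in> lin_span R"
    by (rule lin_span_add[OF a lin_span_cmul[OF b]])
  moreover have "(\<lambda>q. (fsum xs q - c * fsum ys q) + c * (fsum ys q - d * fsum zs q)) = (\<lambda>q. fsum xs q - c * d * fsum zs q)"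
    by (auto simp: fun_eq_iff algebra_simps)
  ultimately show "(\<lambda>q. fsum xs q - c * d * fsum zs q) \<in> lin_span R" by simp
qed

lemma sc_rel_trans1: "sc_rel R 1 xs ys \<Longrightarrow> sc_rel R d ys zs \<Longrightarrow> sc_rel R d xs zs"
  using sc_rel_trans[of R 1 xs ys d zs] by simp

lemma sc_rel_trans2: "sc_rel R d xs ys \<Longrightarrow> sc_rel R 1 ys zs \<Longrightarrow> sc_rel R d xs zs"
  using sc_rel_trans[of R d xs ys 1 zs] by simp

lemma sc_rel_sym: "sc_rel R 1 xs ys \<Longrightarrow> sc_rel R 1 ys xs"
  unfolding sc_rel_def
  by (rule lin_span_eq[OF lin_span_neg]) (auto simp: fun_eq_iff algebra_simps)

lemma sc_rel_join: "sc_rel R c xs zs \<Longrightarrow> sc_rel R c ys zs \<Longrightarrow> sc_rel R 1 xs ys"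
  unfolding sc_rel_def
proof -
  assume a: "(\<lambda>q. fsum xs q - c * fsum zs q) \<in> lin_span R" and b: "(\<lambda>q. fsum ys q - c * fsum zs q) \<in> lin_span R"
  have "(\<lambda>q. (fsum xs q - c * fsum zs q) - (fsum ys q - c * fsum zs q)) \<in> lin_span R"
    by (rule lin_span_diff[OF a b])
  then show "(\<lambda>q. fsum xs q - 1 * fsum ys q) \<in> lin_span R" by simp
qed

lemma sc_rel_app: "sc_rel R c xs ys \<Longrightarrow> sc_rel R c xs' ys' \<Longrightarrow> sc_rel R c (xs @ xs') (ys @ ys')"
  unfolding sc_rel_def
proof -
  assume a: "(\<lambda>q. fsum xs q - c * fsum ys q) \<in> lin_span R" and b: "(\<lambda>q. fsum xs' q - c * fsum ys' q) \<in> lin_span R"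
  have "(\<lambda>q. (fsum xs q - c * fsum ys q) + (fsum xs' q - c * fsum ys' q)) \<in> lin_span R"
    by (rule lin_span_add[OF a b])
  moreover have "(\<lambda>q. (fsum xs q - c * fsum ys q) + (fsum xs' q - c * fsum ys' q)) = (\<lambda>q. fsum (xs @ xs') q - c * fsum (ys @ ys') q)"
    by (auto simp: fun_eq_iff algebra_simps fsum_append)
  ultimately show "(\<lambda>q. fsum (xs @ xs') q - c * fsum (ys @ ys') q) \<in> lin_span R" by simp
qed

lemma sc_rel_concat: "(\<And>x. x \<in> set l \<Longrightarrow> sc_rel R c (f x) (g x)) \<Longrightarrow> sc_rel R c (concat (map f l)) (concat (map g l))"
  by (induction l) (auto simp: sc_rel_Nil sc_rel_app)

lemma concat_map_single: "concat (map (\<lambda>x. [f x]) l) = map f l"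
  by (induction l) auto

lemma sc_rel_map: "(\<And>x. x \<in> set l \<Longrightarrow> sc_rel R c [f x] [g x]) \<Longrightarrow> sc_rel R c (map f l) (map g l)"
  using sc_rel_concat[of l R c "\<lambda>x. [f x]" "\<lambda>x. [g x]"] by (simp add: concat_map_single)

lemma fsum_concat_pairs: "fsum (concat (map (\<lambda>x. [g x, h x]) l)) = fsum (map g l @ map h l)"
  by (induction l) (auto simp: fsum_Cons fsum_append fun_eq_iff algebra_simps)

lemma sc_rel_map2: "(\<And>x. x \<in> set l \<Longrightarrow> sc_rel R c [f x] [g x, h x]) \<Longrightarrow> sc_rel R c (map f l) (map g l @ map h l)"
  using sc_rel_concat[of l R c "\<lambda>x. [f x]" "\<lambda>x. [g x, h x]"]
  by (simp add: concat_map_single) (metis fsum_concat_pairs sc_rel_fsumR)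

lemma sc_rel_base_eq: "r \<in> R \<Longrightarrow> (\<lambda>q. fsum xs q - c * fsum ys q) = r \<Longrightarrow> sc_rel R c xs ys"
  unfolding sc_rel_def using lin_span_base by metis

lemma delta_fsum1: "fsum [x] = delta x" by (simp add: fsum_def)

lemma r2_addL: "v \<in> V \<Longrightarrow> v' \<in> V \<Longrightarrow> w \<in> W \<Longrightarrow> sc_rel (rel2 sV sW V W) 1 [(v + v', w)] [(v, w), (v', w)]"
  by (rule sc_rel_base_eq[of "\<lambda>q. delta (v + v', w) q - delta (v, w) q - delta (v', w) q"])
     (unfold rel2_def, fast, simp add: fsum_def fun_eq_iff)

lemma r2_addR: "v \<in> V \<Longrightarrow> w \<in> W \<Longrightarrow> w' \<in> W \<Longrightarrow> sc_rel (rel2 sV sW V W) 1 [(v, w + w')] [(v, w), (v, w')]"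
  by (rule sc_rel_base_eq[of "\<lambda>q. delta (v, w + w') q - delta (v, w) q - delta (v, w') q"])
     (unfold rel2_def, fast, simp add: fsum_def fun_eq_iff)

lemma r2_scL: "v \<in> V \<Longrightarrow> w \<in> W \<Longrightarrow> sc_rel (rel2 sV sW V W) c [(sV c v, w)] [(v, w)]"
  by (rule sc_rel_base_eq[of "\<lambda>q. delta (sV c v, w) q - c * delta (v, w) q"])
     (unfold rel2_def, fast, simp add: fsum_def fun_eq_iff)

lemma r2_scR: "v \<in> V \<Longrightarrow> w \<in> W \<Longrightarrow> sc_rel (rel2 sV sW V W) c [(v, sW c w)] [(v, w)]"
  by (rule sc_rel_base_eq[of "\<lambda>q. delta (v, sW c w) q - c * delta (v, w) q"])
     (unfold rel2_def, fast, simp add: fsum_def fun_eq_iff)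

lemma r3_add1: "u \<in> U \<Longrightarrow> u' \<in> U \<Longrightarrow> v \<in> V \<Longrightarrow> w \<in> W \<Longrightarrow> sc_rel (rel3 sU sV sW U V W) 1 [(u + u', v, w)] [(u, v, w), (u', v, w)]"
  by (rule sc_rel_base_eq[of "\<lambda>q. delta (u + u', v, w) q - delta (u, v, w) q - delta (u', v, w) q"])
     (unfold rel3_def, fast, simp add: fsum_def fun_eq_iff)

lemma r3_add2: "u \<in> U \<Longrightarrow> v \<in> V \<Longrightarrow> v' \<in> V \<Longrightarrow> w \<in> W \<Longrightarrow> sc_rel (rel3 sU sV sW U V W) 1 [(u, v + v', w)] [(u, v, w), (u, v', w)]"
  by (rule sc_rel_base_eq[of "\<lambda>q. delta (u, v + v', w) q - delta (u, v, w) q - delta (u, v', w) q"])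
     (unfold rel3_def, fast, simp add: fsum_def fun_eq_iff)

lemma r3_add3: "u \<in> U \<Longrightarrow> v \<in> V \<Longrightarrow> w \<in> W \<Longrightarrow> w' \<in> W \<Longrightarrow> sc_rel (rel3 sU sV sW U V W) 1 [(u, v, w + w')] [(u, v, w), (u, v, w')]"
  by (rule sc_rel_base_eq[of "\<lambda>q. delta (u, v, w + w') q - delta (u, v, w) q - delta (u, v, w') q"])
     (unfold rel3_def, fast, simp add: fsum_def fun_eq_iff)

lemma r3_sc1: "u \<in> U \<Longrightarrow> v \<in> V \<Longrightarrow> w \<in> W \<Longrightarrow> sc_rel (rel3 sU sV sW U V W) c [(sU c u, v, w)] [(u, v, w)]"
  by (rule sc_rel_base_eq[of "\<lambda>q. delta (sU c u, v, w) q - c * delta (u, v, w) q"])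
     (unfold rel3_def, fast, simp add: fsum_def fun_eq_iff)

lemma r3_sc2: "u \<in> U \<Longrightarrow> v \<in> V \<Longrightarrow> w \<in> W \<Longrightarrow> sc_rel (rel3 sU sV sW U V W) c [(u, sV c v, w)] [(u, v, w)]"
  by (rule sc_rel_base_eq[of "\<lambda>q. delta (u, sV c v, w) q - c * delta (u, v, w) q"])
     (unfold rel3_def, fast, simp add: fsum_def fun_eq_iff)

lemma r3_sc3: "u \<in> U \<Longrightarrow> v \<in> V \<Longrightarrow> w \<in> W \<Longrightarrow> sc_rel (rel3 sU sV sW U V W) c [(u, v, sW c w)] [(u, v, w)]"
  by (rule sc_rel_base_eq[of "\<lambda>q. delta (u, v, sW c w) q - c * delta (u, v, w) q"])
     (unfold rel3_def, fast, simp add: fsum_def fun_eq_iff)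

lemma r2_zeroL: "0 \<in> V \<Longrightarrow> w \<in> W \<Longrightarrow> sc_rel (rel2 sV sW V W) 1 [(0, w)] []"
proof -
  assume a: "0 \<in> V" "w \<in> W"
  have "sc_rel (rel2 sV sW V W) 1 [(0 + 0, w)] [(0, w), (0, w)]" by (rule r2_addL[OF a(1) a(1) a(2)])
  then show ?thesis unfolding sc_rel_def
    by (rule lin_span_eq[OF lin_span_neg]) (simp add: fsum_def fun_eq_iff)
qed

lemma r2_zeroR: "v \<in> V \<Longrightarrow> 0 \<in> W \<Longrightarrow> sc_rel (rel2 sV sW V W) 1 [(v, 0)] []"
proof -
  assume a: "v \<in> V" "0 \<in> W"
  have "sc_rel (rel2 sV sW V W) 1 [(v, 0 + 0)] [(v, 0), (v, 0)]" by (rule r2_addR[OF a(1) a(2) a(2)])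
  then show ?thesis unfolding sc_rel_def
    by (rule lin_span_eq[OF lin_span_neg]) (simp add: fsum_def fun_eq_iff)
qed

lemma r2_swap: "v \<in> V \<Longrightarrow> w \<in> W \<Longrightarrow> sc_rel (rel2 sV sW V W) 1 [(sV c v, w)] [(v, sW c w)]"
  by (rule sc_rel_join[OF r2_scL r2_scR])

lemma tensor2_eq_iff: "tensor2_eq sV sW V W xs ys \<longleftrightarrow> set xs \<subseteq> V \<times> W \<and> set ys \<subseteq> V \<times> W \<and> sc_rel (rel2 sV sW V W) 1 xs ys"
  unfolding tensor2_eq_def sc_rel_def by simp

lemma tensor3_eq_iff: "tensor3_eq sU sV sW U V W xs ys \<longleftrightarrow> set xs \<subseteq> U \<times> V \<times> W \<and> set ys \<subseteq> U \<times> V \<times> W \<and> sc_rel (rel3 sU sV sW U V W) 1 xs ys"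
  unfolding tensor3_eq_def sc_rel_def by simp

lemma tensor2_UNIV: "tensor2_eq sV sW UNIV UNIV xs ys \<longleftrightarrow> sc_rel (rel2 sV sW UNIV UNIV) 1 xs ys"
  unfolding tensor2_eq_iff by simp

lemma tensor3_UNIV: "tensor3_eq sU sV sW UNIV UNIV UNIV xs ys \<longleftrightarrow> sc_rel (rel3 sU sV sW UNIV UNIV UNIV) 1 xs ys"
  unfolding tensor3_eq_iff by simp


lemma concat_map_single2: "concat (map (\<lambda>(g, b). [F g b]) xs) = map (\<lambda>(g, b). F g b) xs"
  by (induction xs) auto

lemma tensor2_map_right:
  fixes sV :: "'k::field \<Rightarrow> 'v::ab_group_add \<Rightarrow> 'v" and sW :: "'k \<Rightarrow> 'w::ab_group_add \<Rightarrow> 'w"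
    and sW' :: "'k \<Rightarrow> 'w2::ab_group_add \<Rightarrow> 'w2"
  assumes f_add: "\<And>b b'. b \<in> W \<Longrightarrow> b' \<in> W \<Longrightarrow> f (b + b') = f b + f b'"
    and f_sc: "\<And>c b. b \<in> W \<Longrightarrow> f (sW c b) = sW' c (f b)"
    and f_in: "\<And>b. b \<in> W \<Longrightarrow> f b \<in> W'"
    and T: "tensor2_eq sV sW V W xs ys"
  shows "sc_rel (rel2 sV sW' V W') 1 (map (\<lambda>(g, b). (g, f b)) xs) (map (\<lambda>(g, b). (g, f b)) ys)"
proof -
  have "sc_rel (rel2 sV sW' V W') 1 (concat (map (\<lambda>(g, b). [(g, f b)]) xs)) (concat (map (\<lambda>(g, b). [(g, f b)]) ys))"
    by (rule tensor2_map[OF _ _ _ _ T]) (auto simp: f_add f_sc f_in intro: r2_addL r2_addR r2_scL r2_scR)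
  then show ?thesis by (simp add: concat_map_single2)
qed

lemma tensor2_map_left:
  fixes sV :: "'k::field \<Rightarrow> 'v::ab_group_add \<Rightarrow> 'v" and sW :: "'k \<Rightarrow> 'w::ab_group_add \<Rightarrow> 'w"
    and sV' :: "'k \<Rightarrow> 'v2::ab_group_add \<Rightarrow> 'v2"
  assumes f_add: "\<And>b b'. b \<in> V \<Longrightarrow> b' \<in> V \<Longrightarrow> f (b + b') = f b + f b'"
    and f_sc: "\<And>c b. b \<in> V \<Longrightarrow> f (sV c b) = sV' c (f b)"
    and f_in: "\<And>b. b \<in> V \<Longrightarrow> f b \<in> V'"
    and T: "tensor2_eq sV sW V W xs ys"
  shows "sc_rel (rel2 sV' sW V' W) 1 (map (\<lambda>(g, b). (f g, b)) xs) (map (\<lambda>(g, b). (f g, b)) ys)"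
proof -
  have "sc_rel (rel2 sV' sW V' W) 1 (concat (map (\<lambda>(g, b). [(f g, b)]) xs)) (concat (map (\<lambda>(g, b). [(f g, b)]) ys))"
    by (rule tensor2_map[OF _ _ _ _ T]) (auto simp: f_add f_sc f_in intro: r2_addL r2_addR r2_scL r2_scR)
  then show ?thesis by (simp add: concat_map_single2)
qed

lemma concat_map_single3: "concat (map (\<lambda>(h, g, b). [F h g b]) xs) = map (\<lambda>(h, g, b). F h g b) xs"
  by (induction xs) auto

lemma tensor3_map_third:
  fixes sU :: "'k::field \<Rightarrow> 'u::ab_group_add \<Rightarrow> 'u" and sV :: "'k \<Rightarrow> 'v::ab_group_add \<Rightarrow> 'v"
    and sW :: "'k \<Rightarrow> 'w::ab_group_add \<Rightarrow> 'w" and sW' :: "'k \<Rightarrow> 'w2::ab_group_add \<Rightarrow> 'w2"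
  assumes f_add: "\<And>b b'. b \<in> W \<Longrightarrow> b' \<in> W \<Longrightarrow> f (b + b') = f b + f b'"
    and f_sc: "\<And>c b. b \<in> W \<Longrightarrow> f (sW c b) = sW' c (f b)"
    and f_in: "\<And>b. b \<in> W \<Longrightarrow> f b \<in> W'"
    and T: "tensor3_eq sU sV sW U V W xs ys"
  shows "sc_rel (rel3 sU sV sW' U V W') 1 (map (\<lambda>(h, g, b). (h, g, f b)) xs) (map (\<lambda>(h, g, b). (h, g, f b)) ys)"
proof -
  have "sc_rel (rel3 sU sV sW' U V W') 1 (concat (map (\<lambda>(h, g, b). [(h, g, f b)]) xs)) (concat (map (\<lambda>(h, g, b). [(h, g, f b)]) ys))"
    by (rule tensor3_map[OF _ _ _ _ _ _ T]) (auto simp: f_add f_sc f_in intro: r3_add1 r3_add2 r3_add3 r3_sc1 r3_sc2 r3_sc3)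
  then show ?thesis by (simp add: concat_map_single3)
qed


definition prodL :: "('h::times \<times> 'a::times) list \<Rightarrow> ('h \<times> 'a) list \<Rightarrow> ('h \<times> 'a) list" where
  "prodL xs ys = concat (map (\<lambda>(h, a). map (\<lambda>(g, b). (h * g, a * b)) ys) xs)"

lemma prodL_eq: "[(h * g, a * b). (h, a) \<leftarrow> xs, (g, b) \<leftarrow> ys] = prodL xs ys"
  unfolding prodL_def by simp

locale twd =
  fixes sH :: "'k::field \<Rightarrow> 'h::ring_1 \<Rightarrow> 'h"
    and sA :: "'k \<Rightarrow> 'a::ring_1 \<Rightarrow> 'a"
    and \<Delta> :: "'h \<Rightarrow> ('h \<times> 'h) list"
    and \<epsilon> :: "'h \<Rightarrow> 'k"
    and \<pi> :: "'h \<Rightarrow> 'a \<Rightarrow> 'a"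
    and \<psi> :: "'a \<Rightarrow> ('h \<times> 'a) list"
  assumes tw: "left_twisting_datum sH \<Delta> \<epsilon> sA \<pi> \<psi>"
begin

lemma kH: "k_algebra sH" using tw unfolding left_twisting_datum_def bialgebra_def by blast
lemma kA: "k_algebra sA" using tw unfolding left_twisting_datum_def by blast

sublocale H: vector_space sH using kH unfolding k_algebra_def by blast
sublocale A: vector_space sA using kA unfolding k_algebra_def by blast

lemma sH_mult: "sH c (x * y) = sH c x * y" "sH c (x * y) = x * sH c y"
  using kH unfolding k_algebra_def by blast+
lemma sA_mult: "sA c (x * y) = sA c x * y" "sA c (x * y) = x * sA c y"
  using kA unfolding k_algebra_def by blast+

abbreviation "R2 \<equiv> rel2 sH sA UNIV UNIV"
abbreviation "RH \<equiv> rel2 sH sH UNIV UNIV"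
abbreviation "R3 \<equiv> rel3 sH sH sA UNIV UNIV UNIV"
abbreviation "N \<equiv> invariants sA \<epsilon> \<pi>"
abbreviation "C \<equiv> coinvariants sH sA \<psi>"

lemma bi: "bialgebra sH \<Delta> \<epsilon>" using tw unfolding left_twisting_datum_def by blast
lemma modA: "module_algebra sH \<Delta> \<epsilon> sA UNIV \<pi>" using tw unfolding left_twisting_datum_def by blast
lemma comA: "comodule_algebra sH \<Delta> \<epsilon> sA UNIV \<psi>" using tw unfolding left_twisting_datum_def by blast
lemma compat: "sc_rel R2 1 (\<psi> (\<pi> h a)) (map (\<lambda>(g, b). (g, \<pi> h b)) (\<psi> a))"
  using tw unfolding left_twisting_datum_def tensor2_UNIV by simp

lemma Delta_add: "sc_rel RH 1 (\<Delta> (x + y)) (\<Delta> x @ \<Delta> y)"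
  using bi unfolding bialgebra_def tensor2_UNIV by blast
lemma Delta_sc: "sc_rel RH 1 (\<Delta> (sH c x)) (map (\<lambda>(a, b). (sH c a, b)) (\<Delta> x))"
  using bi unfolding bialgebra_def tensor2_UNIV by blast
lemma eps_add: "\<epsilon> (x + y) = \<epsilon> x + \<epsilon> y" using bi unfolding bialgebra_def by blast
lemma eps_sc: "\<epsilon> (sH c x) = c * \<epsilon> x" using bi unfolding bialgebra_def by blast
lemma counitL: "(\<Sum>(a, b)\<leftarrow>\<Delta> h. sH (\<epsilon> a) b) = h" using bi unfolding bialgebra_def by blast
lemma counitR: "(\<Sum>(a, b)\<leftarrow>\<Delta> h. sH (\<epsilon> b) a) = h" using bi unfolding bialgebra_def by blast

lemma pi_addH: "\<pi> (h + g) m = \<pi> h m + \<pi> g m" using modA unfolding module_algebra_def by simp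
lemma pi_scH: "\<pi> (sH c h) m = sA c (\<pi> h m)" using modA unfolding module_algebra_def by simp
lemma pi_add: "\<pi> h (m + n) = \<pi> h m + \<pi> h n" using modA unfolding module_algebra_def by simp
lemma pi_sc: "\<pi> h (sA c m) = sA c (\<pi> h m)" using modA unfolding module_algebra_def by simp
lemma pi_one: "\<pi> 1 m = m" using modA unfolding module_algebra_def by simp
lemma pi_mul: "\<pi> (h * g) m = \<pi> h (\<pi> g m)" using modA unfolding module_algebra_def by simp
lemma pi_mult: "\<pi> h (m * n) = (\<Sum>(h1, h2)\<leftarrow>\<Delta> h. \<pi> h1 m * \<pi> h2 n)" using modA unfolding module_algebra_def by simp
lemma pi_unit: "\<pi> h 1 = sA (\<epsilon> h) 1" using modA unfolding module_algebra_def by simp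

lemma psi_add: "sc_rel R2 1 (\<psi> (m + n)) (\<psi> m @ \<psi> n)"
  using comA unfolding comodule_algebra_def tensor2_UNIV by simp
lemma psi_sc: "sc_rel R2 1 (\<psi> (sA c n)) (map (\<lambda>(h, a). (sH c h, a)) (\<psi> n))"
  using comA unfolding comodule_algebra_def tensor2_UNIV by simp
lemma psi_coassoc: "sc_rel R3 1 [(h, g, b). (h, a) \<leftarrow> \<psi> n, (g, b) \<leftarrow> \<psi> a] [(h1, h2, a). (h, a) \<leftarrow> \<psi> n, (h1, h2) \<leftarrow> \<Delta> h]"
  using comA unfolding comodule_algebra_def tensor3_UNIV by simp
lemma psi_counit: "(\<Sum>(h, a)\<leftarrow>\<psi> n. sA (\<epsilon> h) a) = n"
  using comA unfolding comodule_algebra_def by simp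
lemma psi_mult: "sc_rel R2 1 (\<psi> (m * n)) (prodL (\<psi> m) (\<psi> n))"
  using comA unfolding comodule_algebra_def tensor2_UNIV prodL_eq by simp
lemma psi_one: "sc_rel R2 1 (\<psi> 1) [(1, 1)]"
  using comA unfolding comodule_algebra_def tensor2_UNIV by simp

lemma C_iff: "a \<in> C \<longleftrightarrow> sc_rel R2 1 (\<psi> a) [(1, a)]"
  unfolding coinvariants_def tensor2_UNIV by simp

lemma N_iff: "a \<in> N \<longleftrightarrow> (\<forall>h. \<pi> h a = sA (\<epsilon> h) a)"
  unfolding invariants_def by simp

lemma eps_zero: "\<epsilon> 0 = 0"
proof -
  have "\<epsilon> 0 + \<epsilon> 0 = \<epsilon> 0 + 0" using eps_add[of 0 0] by simp
  then show ?thesis by (rule add_left_imp_eq)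
qed

lemma eps_sum: "\<epsilon> (\<Sum>x\<leftarrow>l. f x) = (\<Sum>x\<leftarrow>l. \<epsilon> (f x))"
  by (induction l) (auto simp: eps_zero eps_add)

lemma eps_Delta: "(\<Sum>(a, b)\<leftarrow>\<Delta> h. \<epsilon> a * \<epsilon> b) = \<epsilon> h"
proof -
  have "\<epsilon> h = \<epsilon> (\<Sum>(a, b)\<leftarrow>\<Delta> h. sH (\<epsilon> a) b)" by (simp add: counitL)
  also have "\<dots> = (\<Sum>(a, b)\<leftarrow>\<Delta> h. \<epsilon> a * \<epsilon> b)"
    by (simp add: eps_sum case_prod_unfold eps_sc)
  finally show ?thesis by simp
qed

lemma pi_zero: "\<pi> h 0 = 0" using pi_add[of h 0 0] by simp
lemma pi_zeroH: "\<pi> 0 m = 0" using pi_addH[of 0 0 m] by simp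

lemma pi_sumH: "\<pi> (\<Sum>x\<leftarrow>l. f x) m = (\<Sum>x\<leftarrow>l. \<pi> (f x) m)"
  by (induction l) (auto simp: pi_zeroH pi_addH)

lemma pi_sum: "\<pi> h (\<Sum>x\<leftarrow>l. f x) = (\<Sum>x\<leftarrow>l. \<pi> h (f x))"
  by (induction l) (auto simp: pi_zero pi_add)

lemma sA_sum_left: "sA (\<Sum>x\<leftarrow>l. f x) m = (\<Sum>x\<leftarrow>l. sA (f x) m)"
  by (induction l) (auto simp: A.scale_left_distrib)

lemma sA_sum_right: "sA c (\<Sum>x\<leftarrow>l. f x) = (\<Sum>x\<leftarrow>l. sA c (f x))"
  by (induction l) (auto simp: A.scale_right_distrib)

lemma sum_list_mult_left: "(\<Sum>x\<leftarrow>l. f x) * (m::'a) = (\<Sum>x\<leftarrow>l. f x * m)"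
  by (induction l) (auto simp: distrib_right)

lemma sum_list_mult_right: "(m::'a) * (\<Sum>x\<leftarrow>l. f x) = (\<Sum>x\<leftarrow>l. m * f x)"
  by (induction l) (auto simp: distrib_left)

lemma N_zero: "0 \<in> N" by (simp add: N_iff pi_zero)
lemma N_one: "1 \<in> N" by (simp add: N_iff pi_unit)
lemma N_add: "x \<in> N \<Longrightarrow> y \<in> N \<Longrightarrow> x + y \<in> N" by (simp add: N_iff pi_add A.scale_right_distrib)
lemma N_sc: "x \<in> N \<Longrightarrow> sA c x \<in> N" by (simp add: N_iff pi_sc mult.commute)
lemma N_sum: "(\<And>x. x \<in> set l \<Longrightarrow> f x \<in> N) \<Longrightarrow> (\<Sum>x\<leftarrow>l. f x) \<in> N"
  by (induction l) (auto simp: N_zero N_add)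
lemma N_mult:
  assumes x: "x \<in> N" and y: "y \<in> N" shows "x * y \<in> N"
proof -
  have "\<pi> h (x * y) = sA (\<epsilon> h) (x * y)" for h
  proof -
    have "\<pi> h (x * y) = (\<Sum>(h1, h2)\<leftarrow>\<Delta> h. sA (\<epsilon> h1) x * sA (\<epsilon> h2) y)"
      using x y by (simp add: pi_mult N_iff)
    also have "\<dots> = (\<Sum>(h1, h2)\<leftarrow>\<Delta> h. sA (\<epsilon> h1 * \<epsilon> h2) (x * y))"
      by (simp add: sA_mult[symmetric] mult.commute)
    also have "\<dots> = sA (\<Sum>(h1, h2)\<leftarrow>\<Delta> h. \<epsilon> h1 * \<epsilon> h2) (x * y)"
      by (simp add: sA_sum_left case_prod_unfold)
    also have "\<dots> = sA (\<epsilon> h) (x * y)" by (simp add: eps_Delta)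
    finally show ?thesis .
  qed
  then show ?thesis by (simp add: N_iff)
qed

lemma N_subalgebra: "subalgebra sA N"
  unfolding subalgebra_def using N_zero N_one N_add N_mult N_sc by blast

end


lemma sc_rel_trans11[trans]: "sc_rel R 1 xs ys \<Longrightarrow> sc_rel R 1 ys zs \<Longrightarrow> sc_rel R 1 xs zs"
  using sc_rel_trans[of R 1 xs ys 1 zs] by simp

context twd begin

lemma psi_zero: "sc_rel R2 1 (\<psi> 0) []"
proof -
  have "(\<lambda>q. fsum (\<psi> 0) q - 1 * fsum (\<psi> 0 @ \<psi> 0) q) \<in> lin_span R2"
    using psi_add[of 0 0] unfolding sc_rel_def by simp
  then have "(\<lambda>q. - (fsum (\<psi> 0) q - 1 * fsum (\<psi> 0 @ \<psi> 0) q)) \<in> lin_span R2"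
    by (rule lin_span_neg)
  then show ?thesis unfolding sc_rel_def by (simp add: fsum_append)
qed

lemma smap_rel: "sc_rel R2 c (map (\<lambda>(h, a). (sH c h, a)) xs) xs"
  using sc_rel_map[of xs R2 c "\<lambda>(h, a). (sH c h, a)" "\<lambda>x. x"]
  by (auto intro: r2_scL)

lemma psi_sc': "sc_rel R2 c (\<psi> (sA c n)) (\<psi> n)"
  by (rule sc_rel_trans1[OF psi_sc smap_rel])

lemma psi_sum: "sc_rel R2 1 (\<psi> (\<Sum>x\<leftarrow>l. f x)) (concat (map (\<lambda>x. \<psi> (f x)) l))"
proof (induction l)
  case Nil then show ?case by (simp add: psi_zero)
next
  case (Cons a l)
  have "sc_rel R2 1 (\<psi> (f a + (\<Sum>x\<leftarrow>l. f x))) (\<psi> (f a) @ \<psi> (\<Sum>x\<leftarrow>l. f x))" by (rule psi_add)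
  also have "sc_rel R2 1 (\<psi> (f a) @ \<psi> (\<Sum>x\<leftarrow>l. f x)) (\<psi> (f a) @ concat (map (\<lambda>x. \<psi> (f x)) l))"
    by (rule sc_rel_app[OF sc_rel_refl Cons])
  finally show ?case by simp
qed

lemma prodL_congL:
  assumes "sc_rel R2 1 xs xs'"
  shows "sc_rel R2 1 (prodL xs ys) (prodL xs' ys)"
  unfolding prodL_def
proof (rule tensor2_map)
  show "tensor2_eq sH sA UNIV UNIV xs xs'" using assms by (simp add: tensor2_UNIV)
  show "sc_rel R2 1 ((\<lambda>(h, a). map (\<lambda>(g, b). (h * g, a * b)) ys) (v + v', w))
          ((\<lambda>(h, a). map (\<lambda>(g, b). (h * g, a * b)) ys) (v, w) @ (\<lambda>(h, a). map (\<lambda>(g, b). (h * g, a * b)) ys) (v', w))" for v v' w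
    by simp (rule sc_rel_map2, auto simp: distrib_right intro!: r2_addL)
  show "sc_rel R2 1 ((\<lambda>(h, a). map (\<lambda>(g, b). (h * g, a * b)) ys) (v, w + w'))
          ((\<lambda>(h, a). map (\<lambda>(g, b). (h * g, a * b)) ys) (v, w) @ (\<lambda>(h, a). map (\<lambda>(g, b). (h * g, a * b)) ys) (v, w'))" for v w w'
    by simp (rule sc_rel_map2, auto simp: distrib_right intro!: r2_addR)
  show "sc_rel R2 c ((\<lambda>(h, a). map (\<lambda>(g, b). (h * g, a * b)) ys) (sH c v, w))
          ((\<lambda>(h, a). map (\<lambda>(g, b). (h * g, a * b)) ys) (v, w))" for c v w
    by simp (rule sc_rel_map, auto simp: sH_mult(1)[symmetric] intro!: r2_scL)
  show "sc_rel R2 c ((\<lambda>(h, a). map (\<lambda>(g, b). (h * g, a * b)) ys) (v, sA c w))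
          ((\<lambda>(h, a). map (\<lambda>(g, b). (h * g, a * b)) ys) (v, w))" for c v w
    by simp (rule sc_rel_map, auto simp: sA_mult(1)[symmetric] intro!: r2_scR)
qed

lemma prodL_congR:
  assumes "sc_rel R2 1 ys ys'"
  shows "sc_rel R2 1 (prodL xs ys) (prodL xs ys')"
  unfolding prodL_def
proof (rule sc_rel_concat)
  fix x assume "x \<in> set xs"
  obtain h a where x: "x = (h, a)" by force
  have "sc_rel R2 1 (concat (map (\<lambda>(g, b). [(h * g, a * b)]) ys)) (concat (map (\<lambda>(g, b). [(h * g, a * b)]) ys'))"
  proof (rule tensor2_map)
    show "tensor2_eq sH sA UNIV UNIV ys ys'" using assms by (simp add: tensor2_UNIV)
  qed (auto simp: distrib_left sH_mult(2)[symmetric] sA_mult(2)[symmetric] intro!: r2_addL r2_addR r2_scL r2_scR)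
  then show "sc_rel R2 1 ((\<lambda>(h, a). map (\<lambda>(g, b). (h * g, a * b)) ys) x) ((\<lambda>(h, a). map (\<lambda>(g, b). (h * g, a * b)) ys') x)"
    by (simp add: x concat_map_single2)
qed

lemma prodL_cong: "sc_rel R2 1 xs xs' \<Longrightarrow> sc_rel R2 1 ys ys' \<Longrightarrow> sc_rel R2 1 (prodL xs ys) (prodL xs' ys')"
  using prodL_congL prodL_congR sc_rel_trans11 by blast

lemma C_zero: "0 \<in> C"
  unfolding C_iff using psi_zero sc_rel_sym[OF r2_zeroR[of 1 UNIV UNIV sH sA]] sc_rel_trans11 by blast

lemma C_one: "1 \<in> C" unfolding C_iff by (rule psi_one)

lemma C_add: assumes "x \<in> C" "y \<in> C" shows "x + y \<in> C"
proof -
  have "sc_rel R2 1 (\<psi> (x + y)) (\<psi> x @ \<psi> y)" by (rule psi_add)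
  also have "sc_rel R2 1 (\<psi> x @ \<psi> y) ([(1, x)] @ [(1, y)])"
    using assms unfolding C_iff by (rule sc_rel_app)
  also have "sc_rel R2 1 ([(1, x)] @ [(1, y)]) [(1, x + y)]"
    by (simp add: sc_rel_sym r2_addR)
  finally show ?thesis unfolding C_iff .
qed

lemma C_mult: assumes "x \<in> C" "y \<in> C" shows "x * y \<in> C"
proof -
  have "sc_rel R2 1 (\<psi> (x * y)) (prodL (\<psi> x) (\<psi> y))" by (rule psi_mult)
  also have "sc_rel R2 1 (prodL (\<psi> x) (\<psi> y)) (prodL [(1, x)] [(1, y)])"
    using assms unfolding C_iff by (rule prodL_cong)
  finally show ?thesis unfolding C_iff by (simp add: prodL_def)
qed

lemma C_sc: assumes "x \<in> C" shows "sA c x \<in> C"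
proof -
  have "sc_rel R2 c (\<psi> (sA c x)) [(1, x)]"
    using sc_rel_trans2[OF psi_sc' assms[unfolded C_iff]] .
  moreover have "sc_rel R2 c [(1, sA c x)] [(1, x)]" by (simp add: r2_scR)
  ultimately show ?thesis unfolding C_iff by (rule sc_rel_join)
qed

lemma C_pi: assumes "a \<in> C" shows "\<pi> h a \<in> C"
proof -
  have "sc_rel R2 1 (\<psi> (\<pi> h a)) (map (\<lambda>(g, b). (g, \<pi> h b)) (\<psi> a))" by (rule compat)
  also have "sc_rel R2 1 (map (\<lambda>(g, b). (g, \<pi> h b)) (\<psi> a)) (map (\<lambda>(g, b). (g, \<pi> h b)) [(1, a)])"
    by (rule tensor2_map_right[where W=UNIV and W'=UNIV and sW=sA]) (use assms in \<open>auto simp: pi_add pi_sc C_iff tensor2_UNIV\<close>)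
  finally show ?thesis unfolding C_iff by simp
qed

lemma C_subalgebra: "subalgebra sA C"
  unfolding subalgebra_def using C_zero C_one C_add C_mult C_sc by blast

lemma C_module: "module_algebra sH \<Delta> \<epsilon> sA C \<pi>"
  unfolding module_algebra_def
  using C_pi by (simp add: pi_addH pi_scH pi_add pi_sc pi_one pi_mul pi_mult pi_unit)

end


context twd begin

definition "Bh = H.extend_basis {}"
definition "crd e g = H.representation Bh g e"

lemma Bh_ind: "H.independent Bh"
  unfolding Bh_def by (rule H.independent_extend_basis[OF H.independent_empty])
lemma Bh_span: "g \<in> H.span Bh"
  unfolding Bh_def using H.span_extend_basis[OF H.independent_empty] by simp

lemma crd_add: "crd e (g + g') = crd e g + crd e g'"
  unfolding crd_def by (simp add: H.representation_add[OF Bh_ind Bh_span Bh_span])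
lemma crd_sc: "crd e (sH c g) = c * crd e g"
  unfolding crd_def by (simp add: H.representation_scale[OF Bh_ind Bh_span])
lemma crd_fin: "finite {e. crd e g \<noteq> 0}"
  unfolding crd_def by (rule H.finite_representation)
lemma crd_exp:
  assumes "finite S" "{e. crd e g \<noteq> 0} \<subseteq> S"
  shows "(\<Sum>e\<in>S. sH (crd e g) e) = g"
proof -
  have "(\<Sum>e\<in>S. sH (crd e g) e) = (\<Sum>e\<in>{e. crd e g \<noteq> 0}. sH (crd e g) e)"
    by (rule sum.mono_neutral_right) (use assms in auto)
  also have "\<dots> = g" unfolding crd_def
    by (rule H.sum_nonzero_representation_eq[OF Bh_ind Bh_span])
  finally show ?thesis .
qed

lemma vsA: "vector_space sA" using kA unfolding k_algebra_def by blast

lemma S2: "sc_rel R2 1 [(\<Sum>e\<leftarrow>l. f e, c)] (map (\<lambda>e. (f e, c)) l)"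
proof (induction l)
  case Nil then show ?case by (simp add: r2_zeroL)
next
  case (Cons a l)
  have "sc_rel R2 1 [(f a + (\<Sum>e\<leftarrow>l. f e), c)] ([(f a, c)] @ [(\<Sum>e\<leftarrow>l. f e, c)])"
    by (simp add: r2_addL)
  also have "sc_rel R2 1 ([(f a, c)] @ [(\<Sum>e\<leftarrow>l. f e, c)]) ([(f a, c)] @ map (\<lambda>e. (f e, c)) l)"
    by (rule sc_rel_app[OF sc_rel_refl Cons])
  finally show ?case by simp
qed

lemma S1:
  assumes d: "distinct es" and sub: "{e. crd e g \<noteq> 0} \<subseteq> set es"
  shows "sc_rel R2 1 [(g, c)] (map (\<lambda>e. (e, sA (crd e g) c)) es)"
proof -
  have "g = (\<Sum>e\<leftarrow>es. sH (crd e g) e)"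
    using crd_exp[of "set es" g] sub d by (simp add: sum_list_distinct_conv_sum_set)
  then have "sc_rel R2 1 [(g, c)] (map (\<lambda>e. (sH (crd e g) e, c)) es)"
    using S2[of "\<lambda>e. sH (crd e g) e" es c] by simp
  also have "sc_rel R2 1 (map (\<lambda>e. (sH (crd e g) e, c)) es) (map (\<lambda>e. (e, sA (crd e g) c)) es)"
    by (rule sc_rel_map) (simp add: r2_swap)
  finally show ?thesis .
qed

lemma X:
  assumes d: "distinct es" and sub: "\<And>g c. (g, c) \<in> set z \<Longrightarrow> {e. crd e g \<noteq> 0} \<subseteq> set es"
  shows "sc_rel R2 1 z (map (\<lambda>e. (e, \<Sum>(g, c)\<leftarrow>z. sA (crd e g) c)) es)"
  using sub
proof (induction z)
  case Nil
  have "sc_rel R2 1 (concat (map (\<lambda>e. [(e, 0)]) es)) (concat (map (\<lambda>e. []) es))"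
    by (rule sc_rel_concat) (simp add: r2_zeroR)
  moreover have "concat (map (\<lambda>e. []) es) = ([] :: ('h \<times> 'a) list)" by (induction es) auto
  ultimately have "sc_rel R2 1 (map (\<lambda>e. (e, 0)) es) []" by (simp add: concat_map_single)
  then show ?case by (simp add: sc_rel_sym)
next
  case (Cons p z)
  obtain g c where p: "p = (g, c)" by force
  have "sc_rel R2 1 ([(g, c)] @ z) (map (\<lambda>e. (e, sA (crd e g) c)) es @ map (\<lambda>e. (e, \<Sum>(g, c)\<leftarrow>z. sA (crd e g) c)) es)"
    by (rule sc_rel_app[OF S1[OF d] Cons.IH]) (use Cons.prems p in auto)
  also have "sc_rel R2 1 (map (\<lambda>e. (e, sA (crd e g) c)) es @ map (\<lambda>e. (e, \<Sum>(g, c)\<leftarrow>z. sA (crd e g) c)) es)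
     (map (\<lambda>e. (e, sA (crd e g) c + (\<Sum>(g, c)\<leftarrow>z. sA (crd e g) c))) es)"
    by (rule sc_rel_sym, rule sc_rel_map2) (simp add: r2_addR)
  finally show ?case by (simp add: p)
qed

definition "esf a = (SOME es. distinct es \<and> set es = (\<Union>g\<in>fst ` set (\<psi> a). {e. crd e g \<noteq> 0}))"
definition "coef e a = (\<Sum>(g, c)\<leftarrow>\<psi> a. sA (crd e g) c)"
definition "psi0 a = map (\<lambda>e. (e, coef e a)) (esf a)"

lemma esf: "distinct (esf a) \<and> set (esf a) = (\<Union>g\<in>fst ` set (\<psi> a). {e. crd e g \<noteq> 0})"
proof -
  have "finite (\<Union>g\<in>fst ` set (\<psi> a). {e. crd e g \<noteq> 0})" by (simp add: crd_fin)
  then have "\<exists>es. distinct es \<and> set es = (\<Union>g\<in>fst ` set (\<psi> a). {e. crd e g \<noteq> 0})"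
    using finite_distinct_list by metis
  then show ?thesis unfolding esf_def by (rule someI_ex)
qed

lemma psi_psi0: "sc_rel R2 1 (\<psi> a) (psi0 a)"
  unfolding psi0_def coef_def
  by (rule X) (use esf in force)+

lemma coef_N:
  assumes a: "a \<in> N" shows "coef e a \<in> N"
proof -
  have "\<pi> h (coef e a) = sA (\<epsilon> h) (coef e a)" for h
  proof -
    have "sc_rel R2 1 (map (\<lambda>(g, b). (g, \<pi> h b)) (\<psi> a)) (\<psi> (\<pi> h a))" by (rule sc_rel_sym[OF compat])
    also have "\<pi> h a = sA (\<epsilon> h) a" using a by (simp add: N_iff)
    also have "sc_rel R2 1 (\<psi> (sA (\<epsilon> h) a)) (map (\<lambda>(g, b). (sH (\<epsilon> h) g, b)) (\<psi> a))" by (rule psi_sc)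
    finally have T: "sc_rel R2 1 (map (\<lambda>(g, b). (g, \<pi> h b)) (\<psi> a)) (map (\<lambda>(g, b). (sH (\<epsilon> h) g, b)) (\<psi> a))" .
    have "(\<Sum>p\<leftarrow>map (\<lambda>(g, b). (g, \<pi> h b)) (\<psi> a). (\<lambda>(g, b). sA (crd e g) b) p)
        = (\<Sum>p\<leftarrow>map (\<lambda>(g, b). (sH (\<epsilon> h) g, b)) (\<psi> a). (\<lambda>(g, b). sA (crd e g) b) p)"
      by (rule tensor2_functional[OF vsA _ _ _ _ T[unfolded tensor2_UNIV[symmetric]]])
         (auto simp: crd_add crd_sc A.scale_left_distrib A.scale_right_distrib)
    then have "(\<Sum>(g, b)\<leftarrow>\<psi> a. sA (crd e g) (\<pi> h b)) = (\<Sum>(g, b)\<leftarrow>\<psi> a. sA (\<epsilon> h) (sA (crd e g) b))"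
      by (simp add: case_prod_unfold crd_sc o_def)
    then show ?thesis
      unfolding coef_def by (simp add: pi_sum sA_sum_right case_prod_unfold pi_sc)
  qed
  then show ?thesis by (simp add: N_iff)
qed

lemma psi0_N: "a \<in> N \<Longrightarrow> set (psi0 a) \<subseteq> UNIV \<times> N"
  unfolding psi0_def using coef_N by auto

lemma psi'_exists: "\<exists>\<psi>'. \<forall>a\<in>N. set (\<psi>' a) \<subseteq> UNIV \<times> N \<and> tensor2_eq sH sA UNIV UNIV (\<psi>' a) (\<psi> a)"
  by (rule exI[of _ psi0]) (simp add: psi0_N tensor2_UNIV sc_rel_sym[OF psi_psi0])

end


definition liftP :: "'h \<Rightarrow> ('h \<times> 'a) list \<Rightarrow> ('h \<times> 'h \<times> 'a) list" where
  "liftP h l = map (\<lambda>(g, b). (h, g, b)) l"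
definition liftD :: "'a \<Rightarrow> ('h \<times> 'h) list \<Rightarrow> ('h \<times> 'h \<times> 'a) list" where
  "liftD a l = map (\<lambda>(h1, h2). (h1, h2, a)) l"

lemma Xform: "[(h, g, b). (h, a) \<leftarrow> xs, (g, b) \<leftarrow> f a] = concat (map (\<lambda>(h, a). liftP h (f a)) xs)"
  unfolding liftP_def by simp
lemma Yform: "[(h1, h2, a). (h, a) \<leftarrow> xs, (h1, h2) \<leftarrow> D h] = concat (map (\<lambda>(h, a). liftD a (D h)) xs)"
  unfolding liftD_def by simp

context twd begin

lemma proj_exists: "\<exists>p. (\<forall>x. p x \<in> N) \<and> (\<forall>x y. p (x + y) = p x + p y) \<and> (\<forall>c x. p (sA c x) = sA c (p x)) \<and> (\<forall>x\<in>N. p x = x)"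
proof -
  interpret AA: vector_space_pair sA sA by (simp add: vector_space_pair_def vsA)
  have sub: "A.subspace N" by (rule A.subspaceI) (auto simp: N_zero N_add N_sc)
  obtain g where g: "g ` UNIV \<subseteq> N" "Vector_Spaces.linear sA sA g" "\<forall>v\<in>N. g v = v"
    using AA.linear_exists_left_inverse_on[OF A.linear_id sub] by auto
  show ?thesis
    by (rule exI[of _ g]) (use g AA.linear_add[OF g(2)] AA.linear_scale[OF g(2)] in auto)
qed

definition "prj = (SOME p. (\<forall>x. p x \<in> N) \<and> (\<forall>x y. p (x + y) = p x + p y) \<and> (\<forall>c x. p (sA c x) = sA c (p x)) \<and> (\<forall>x\<in>N. p x = x))"

lemma prj: "prj x \<in> N" "prj (x + y) = prj x + prj y" "prj (sA c x) = sA c (prj x)" "v \<in> N \<Longrightarrow> prj v = v"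
  using someI_ex[OF proj_exists] unfolding prj_def[symmetric] by auto

lemma inj2:
  assumes "set xs \<subseteq> UNIV \<times> N" "set ys \<subseteq> UNIV \<times> N" "sc_rel R2 1 xs ys"
  shows "tensor2_eq sH sA UNIV N xs ys"
proof -
  have "sc_rel (rel2 sH sA UNIV N) 1 (map (\<lambda>(g, b). (g, prj b)) xs) (map (\<lambda>(g, b). (g, prj b)) ys)"
    by (rule tensor2_map_right[where W=UNIV and sW=sA]) (use assms in \<open>auto simp: prj tensor2_UNIV\<close>)
  moreover have "map (\<lambda>(g, b). (g, prj b)) xs = xs" "map (\<lambda>(g, b). (g, prj b)) ys = ys"
    using assms(1,2) by (auto intro!: map_idI simp: prj)
  ultimately show ?thesis using assms unfolding tensor2_eq_iff by simp
qed

lemma inj3: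
  assumes "set xs \<subseteq> UNIV \<times> UNIV \<times> N" "set ys \<subseteq> UNIV \<times> UNIV \<times> N" "sc_rel R3 1 xs ys"
  shows "tensor3_eq sH sH sA UNIV UNIV N xs ys"
proof -
  have "sc_rel (rel3 sH sH sA UNIV UNIV N) 1 (map (\<lambda>(h, g, b). (h, g, prj b)) xs) (map (\<lambda>(h, g, b). (h, g, prj b)) ys)"
    by (rule tensor3_map_third[where U=UNIV and V=UNIV and W=UNIV and sW=sA]) (use assms in \<open>auto simp: prj tensor3_UNIV\<close>)
  moreover have "map (\<lambda>(h, g, b). (h, g, prj b)) xs = xs" "map (\<lambda>(h, g, b). (h, g, prj b)) ys = ys"
    using assms(1,2) by (auto intro!: map_idI simp: prj)
  ultimately show ?thesis using assms unfolding tensor3_eq_iff by simp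
qed

lemma liftP_cong: "sc_rel R2 1 l l' \<Longrightarrow> sc_rel R3 1 (liftP h l) (liftP h l')"
proof -
  assume a: "sc_rel R2 1 l l'"
  have "sc_rel R3 1 (concat (map (\<lambda>(g, b). [(h, g, b)]) l)) (concat (map (\<lambda>(g, b). [(h, g, b)]) l'))"
    by (rule tensor2_map[where V=UNIV and W=UNIV and sV=sH and sW=sA]) (use a in \<open>auto simp: tensor2_UNIV intro: r3_add2 r3_add3 r3_sc2 r3_sc3\<close>)
  then show ?thesis by (simp add: concat_map_single2 liftP_def)
qed

lemma liftD_cong: "sc_rel RH 1 l l' \<Longrightarrow> sc_rel R3 1 (liftD a l) (liftD a l')"
proof -
  assume a: "sc_rel RH 1 l l'"
  have "sc_rel R3 1 (concat (map (\<lambda>(g, b). [(g, b, a)]) l)) (concat (map (\<lambda>(g, b). [(g, b, a)]) l'))"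
    by (rule tensor2_map[where V=UNIV and W=UNIV and sV=sH and sW=sH]) (use a in \<open>auto simp: tensor2_UNIV intro: r3_add1 r3_add2 r3_sc1 r3_sc2\<close>)
  then show ?thesis by (simp add: concat_map_single2 liftD_def)
qed

lemma stepY: "sc_rel R2 1 xs ys \<Longrightarrow> sc_rel R3 1 (concat (map (\<lambda>(h, a). liftD a (\<Delta> h)) xs)) (concat (map (\<lambda>(h, a). liftD a (\<Delta> h)) ys))"
proof (rule tensor2_map)
  assume "sc_rel R2 1 xs ys" then show "tensor2_eq sH sA UNIV UNIV xs ys" by (simp add: tensor2_UNIV)
  show "sc_rel R3 1 ((\<lambda>(h, a). liftD a (\<Delta> h)) (v + v', w)) ((\<lambda>(h, a). liftD a (\<Delta> h)) (v, w) @ (\<lambda>(h, a). liftD a (\<Delta> h)) (v', w))" for v v' w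
    using liftD_cong[OF Delta_add[of v v'], of w] by (simp add: liftD_def)
  show "sc_rel R3 1 ((\<lambda>(h, a). liftD a (\<Delta> h)) (v, w + w')) ((\<lambda>(h, a). liftD a (\<Delta> h)) (v, w) @ (\<lambda>(h, a). liftD a (\<Delta> h)) (v, w'))" for v w w'
    unfolding liftD_def by simp (rule sc_rel_map2, auto intro: r3_add3)
  show "sc_rel R3 c ((\<lambda>(h, a). liftD a (\<Delta> h)) (sH c v, w)) ((\<lambda>(h, a). liftD a (\<Delta> h)) (v, w))" for c v w
  proof -
    have "sc_rel R3 1 (liftD w (\<Delta> (sH c v))) (liftD w (map (\<lambda>(a, b). (sH c a, b)) (\<Delta> v)))"
      by (rule liftD_cong[OF Delta_sc])
    moreover have "sc_rel R3 c (liftD w (map (\<lambda>(a, b). (sH c a, b)) (\<Delta> v))) (liftD w (\<Delta> v))"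
      unfolding liftD_def by simp (rule sc_rel_map, auto intro: r3_sc1)
    ultimately show ?thesis by (simp add: sc_rel_trans1)
  qed
  show "sc_rel R3 c ((\<lambda>(h, a). liftD a (\<Delta> h)) (v, sA c w)) ((\<lambda>(h, a). liftD a (\<Delta> h)) (v, w))" for c v w
    unfolding liftD_def by simp (rule sc_rel_map, auto intro: r3_sc3)
qed

lemma stepX: "sc_rel R2 1 xs ys \<Longrightarrow> sc_rel R3 1 (concat (map (\<lambda>(h, a). liftP h (\<psi> a)) xs)) (concat (map (\<lambda>(h, a). liftP h (\<psi> a)) ys))"
proof (rule tensor2_map)
  assume "sc_rel R2 1 xs ys" then show "tensor2_eq sH sA UNIV UNIV xs ys" by (simp add: tensor2_UNIV)
  show "sc_rel R3 1 ((\<lambda>(h, a). liftP h (\<psi> a)) (v + v', w)) ((\<lambda>(h, a). liftP h (\<psi> a)) (v, w) @ (\<lambda>(h, a). liftP h (\<psi> a)) (v', w))" for v v' w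
    unfolding liftP_def by simp (rule sc_rel_map2, auto intro: r3_add1)
  show "sc_rel R3 1 ((\<lambda>(h, a). liftP h (\<psi> a)) (v, w + w')) ((\<lambda>(h, a). liftP h (\<psi> a)) (v, w) @ (\<lambda>(h, a). liftP h (\<psi> a)) (v, w'))" for v w w'
    using liftP_cong[OF psi_add[of w w'], of v] by (simp add: liftP_def)
  show "sc_rel R3 c ((\<lambda>(h, a). liftP h (\<psi> a)) (sH c v, w)) ((\<lambda>(h, a). liftP h (\<psi> a)) (v, w))" for c v w
    unfolding liftP_def by simp (rule sc_rel_map, auto intro: r3_sc1)
  show "sc_rel R3 c ((\<lambda>(h, a). liftP h (\<psi> a)) (v, sA c w)) ((\<lambda>(h, a). liftP h (\<psi> a)) (v, w))" for c v w
  proof -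
    have "sc_rel R3 1 (liftP v (\<psi> (sA c w))) (liftP v (map (\<lambda>(h, a). (sH c h, a)) (\<psi> w)))"
      by (rule liftP_cong[OF psi_sc])
    moreover have "sc_rel R3 c (liftP v (map (\<lambda>(h, a). (sH c h, a)) (\<psi> w))) (liftP v (\<psi> w))"
      unfolding liftP_def by simp (rule sc_rel_map, auto intro: r3_sc2)
    ultimately show ?thesis by (simp add: sc_rel_trans1)
  qed
qed

end


context twd begin

lemma prodL_set: "set xs \<subseteq> UNIV \<times> N \<Longrightarrow> set ys \<subseteq> UNIV \<times> N \<Longrightarrow> set (prodL xs ys) \<subseteq> UNIV \<times> N"
  unfolding prodL_def by (auto intro!: N_mult)

lemma comod_N:
  assumes Hp: "\<forall>a\<in>N. set (\<psi>' a) \<subseteq> UNIV \<times> N \<and> tensor2_eq sH sA UNIV UNIV (\<psi>' a) (\<psi> a)"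
  shows "comodule_algebra sH \<Delta> \<epsilon> sA N \<psi>'"
proof -
  have hs: "set (\<psi>' a) \<subseteq> UNIV \<times> N" if "a \<in> N" for a using Hp that by blast
  have hr: "sc_rel R2 1 (\<psi>' a) (\<psi> a)" if "a \<in> N" for a using Hp that by (simp add: tensor2_UNIV)
  have hr': "sc_rel R2 1 (\<psi> a) (\<psi>' a)" if "a \<in> N" for a using hr[OF that] by (rule sc_rel_sym)
  have c2: "tensor2_eq sH sA UNIV N (\<psi>' (m + n)) (\<psi>' m @ \<psi>' n)" if "m \<in> N" "n \<in> N" for m n
  proof (rule inj2)
    show "set (\<psi>' (m + n)) \<subseteq> UNIV \<times> N" using hs N_add that by blast
    show "set (\<psi>' m @ \<psi>' n) \<subseteq> UNIV \<times> N" using hs that by auto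
    have "sc_rel R2 1 (\<psi>' (m + n)) (\<psi> (m + n))" using hr N_add that by blast
    also have "sc_rel R2 1 (\<psi> (m + n)) (\<psi> m @ \<psi> n)" by (rule psi_add)
    also have "sc_rel R2 1 (\<psi> m @ \<psi> n) (\<psi>' m @ \<psi>' n)" using hr' that by (simp add: sc_rel_app)
    finally show "sc_rel R2 1 (\<psi>' (m + n)) (\<psi>' m @ \<psi>' n)" .
  qed
  have c3: "tensor2_eq sH sA UNIV N (\<psi>' (sA c n)) (map (\<lambda>(h, a). (sH c h, a)) (\<psi>' n))" if "n \<in> N" for c n
  proof (rule inj2)
    show "set (\<psi>' (sA c n)) \<subseteq> UNIV \<times> N" using hs N_sc that by blast
    show "set (map (\<lambda>(h, a). (sH c h, a)) (\<psi>' n)) \<subseteq> UNIV \<times> N" using hs that by auto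
    have "sc_rel R2 1 (\<psi>' (sA c n)) (\<psi> (sA c n))" using hr N_sc that by blast
    also have "sc_rel R2 1 (\<psi> (sA c n)) (map (\<lambda>(h, a). (sH c h, a)) (\<psi> n))" by (rule psi_sc)
    also have "sc_rel R2 1 (map (\<lambda>(h, a). (sH c h, a)) (\<psi> n)) (map (\<lambda>(h, a). (sH c h, a)) (\<psi>' n))"
      by (rule tensor2_map_left[where V=UNIV and sV=sH]) (use hr' that in \<open>auto simp: tensor2_UNIV H.scale_right_distrib mult.commute\<close>)
    finally show "sc_rel R2 1 (\<psi>' (sA c n)) (map (\<lambda>(h, a). (sH c h, a)) (\<psi>' n))" .
  qed
  have c4: "tensor3_eq sH sH sA UNIV UNIV N
            [(h, g, b). (h, a) \<leftarrow> \<psi>' n, (g, b) \<leftarrow> \<psi>' a]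
            [(h1, h2, a). (h, a) \<leftarrow> \<psi>' n, (h1, h2) \<leftarrow> \<Delta> h]" if n: "n \<in> N" for n
    unfolding Xform Yform
  proof (rule inj3)
    show "set (concat (map (\<lambda>(h, a). liftP h (\<psi>' a)) (\<psi>' n))) \<subseteq> UNIV \<times> UNIV \<times> N"
    proof
      fix t assume "t \<in> set (concat (map (\<lambda>(h, a). liftP h (\<psi>' a)) (\<psi>' n)))"
      then obtain h a g b where t: "(h, a) \<in> set (\<psi>' n)" "(g, b) \<in> set (\<psi>' a)" "t = (h, g, b)"
        by (auto simp: liftP_def)
      have "a \<in> N" using hs[OF n] t(1) by auto
      then have "b \<in> N" using hs t(2) by auto
      then show "t \<in> UNIV \<times> UNIV \<times> N" using t(3) by simp
    qed
    show "set (concat (map (\<lambda>(h, a). liftD a (\<Delta> h)) (\<psi>' n))) \<subseteq> UNIV \<times> UNIV \<times> N"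
      using hs n by (force simp: liftD_def)
    have "sc_rel R3 1 (concat (map (\<lambda>(h, a). liftP h (\<psi>' a)) (\<psi>' n))) (concat (map (\<lambda>(h, a). liftP h (\<psi> a)) (\<psi>' n)))"
    proof (rule sc_rel_concat)
      fix x assume x: "x \<in> set (\<psi>' n)"
      obtain h a where xa: "x = (h, a)" by force
      have "a \<in> N" using hs[OF n] x xa by auto
      then show "sc_rel R3 1 ((\<lambda>(h, a). liftP h (\<psi>' a)) x) ((\<lambda>(h, a). liftP h (\<psi> a)) x)"
        using liftP_cong[OF hr] xa by simp
    qed
    also have "sc_rel R3 1 (concat (map (\<lambda>(h, a). liftP h (\<psi> a)) (\<psi>' n))) (concat (map (\<lambda>(h, a). liftP h (\<psi> a)) (\<psi> n)))"
      by (rule stepX[OF hr[OF n]])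
    also have "sc_rel R3 1 (concat (map (\<lambda>(h, a). liftP h (\<psi> a)) (\<psi> n))) (concat (map (\<lambda>(h, a). liftD a (\<Delta> h)) (\<psi> n)))"
      using psi_coassoc[of n] unfolding Xform Yform .
    also have "sc_rel R3 1 (concat (map (\<lambda>(h, a). liftD a (\<Delta> h)) (\<psi> n))) (concat (map (\<lambda>(h, a). liftD a (\<Delta> h)) (\<psi>' n)))"
      by (rule stepY[OF hr'[OF n]])
    finally show "sc_rel R3 1 (concat (map (\<lambda>(h, a). liftP h (\<psi>' a)) (\<psi>' n))) (concat (map (\<lambda>(h, a). liftD a (\<Delta> h)) (\<psi>' n)))" .
  qed
  have c5: "(\<Sum>(h, a)\<leftarrow>\<psi>' n. sA (\<epsilon> h) a) = n" if n: "n \<in> N" for n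
  proof -
    have "(\<Sum>p\<leftarrow>\<psi>' n. (\<lambda>(h, a). sA (\<epsilon> h) a) p) = (\<Sum>p\<leftarrow>\<psi> n. (\<lambda>(h, a). sA (\<epsilon> h) a) p)"
      by (rule tensor2_functional[OF vsA _ _ _ _ hr[OF n, unfolded tensor2_UNIV[symmetric]]])
         (auto simp: eps_add eps_sc A.scale_left_distrib A.scale_right_distrib)
    then show ?thesis using psi_counit[of n] by simp
  qed
  have c6: "tensor2_eq sH sA UNIV N (\<psi>' (m * n)) [(h * g, a * b). (h, a) \<leftarrow> \<psi>' m, (g, b) \<leftarrow> \<psi>' n]"
    if "m \<in> N" "n \<in> N" for m n
    unfolding prodL_eq
  proof (rule inj2)
    show "set (\<psi>' (m * n)) \<subseteq> UNIV \<times> N" using hs N_mult that by blast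
    show "set (prodL (\<psi>' m) (\<psi>' n)) \<subseteq> UNIV \<times> N" using hs that by (simp add: prodL_set)
    have "sc_rel R2 1 (\<psi>' (m * n)) (\<psi> (m * n))" using hr N_mult that by blast
    also have "sc_rel R2 1 (\<psi> (m * n)) (prodL (\<psi> m) (\<psi> n))" by (rule psi_mult)
    also have "sc_rel R2 1 (prodL (\<psi> m) (\<psi> n)) (prodL (\<psi>' m) (\<psi>' n))" using hr' that by (simp add: prodL_cong)
    finally show "sc_rel R2 1 (\<psi>' (m * n)) (prodL (\<psi>' m) (\<psi>' n))" .
  qed
  have c7: "tensor2_eq sH sA UNIV N (\<psi>' 1) [(1, 1)]"
  proof (rule inj2)
    show "set (\<psi>' 1) \<subseteq> UNIV \<times> N" using hs N_one by blast
    show "set [(1::'h, 1::'a)] \<subseteq> UNIV \<times> N" using N_one by simp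
    have "sc_rel R2 1 (\<psi>' 1) (\<psi> 1)" using hr N_one by blast
    also have "sc_rel R2 1 (\<psi> 1) [(1, 1)]" by (rule psi_one)
    finally show "sc_rel R2 1 (\<psi>' 1) [(1, 1)]" .
  qed
  show ?thesis unfolding comodule_algebra_def
    using hs c2 c3 c4 c5 c6 c7 by blast
qed

end


lemma sum_list_cong2: "(\<And>x. x \<in> set l \<Longrightarrow> f x = g x) \<Longrightarrow> sum_list (map f l) = sum_list (map g l)"
  by (metis map_cong)

context twd begin

lemma mult_map_wd:
  assumes "tensor2_eq sA sA C N xs ys" shows "mult_map xs = mult_map ys"
proof -
  have "(\<Sum>p\<leftarrow>xs. (\<lambda>(m, n). m * n) p) = (\<Sum>p\<leftarrow>ys. (\<lambda>(m, n). m * n) p)"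
    by (rule tensor2_functional[OF vsA _ _ _ _ assms]) (auto simp: distrib_left distrib_right sA_mult(1)[symmetric] sA_mult(2)[symmetric])
  then show ?thesis unfolding mult_map_def by simp
qed

abbreviation "tp \<equiv> twisted_prod \<pi> \<psi>"

lemma tp_respect: "sc_rel R2 1 xs ys \<Longrightarrow> (\<Sum>(g, c)\<leftarrow>xs. c * \<pi> g b) = (\<Sum>(g, c)\<leftarrow>ys. c * \<pi> g b)"
proof -
  assume a: "sc_rel R2 1 xs ys"
  have "(\<Sum>p\<leftarrow>xs. (\<lambda>(g, c). c * \<pi> g b) p) = (\<Sum>p\<leftarrow>ys. (\<lambda>(g, c). c * \<pi> g b) p)"
    by (rule tensor2_functional[OF vsA _ _ _ _ a[unfolded tensor2_UNIV[symmetric]]])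
       (auto simp: distrib_left distrib_right pi_addH pi_scH sA_mult(1)[symmetric] sA_mult(2)[symmetric])
  then show ?thesis by simp
qed

lemma tp_zero_left: "tp 0 b = 0"
  unfolding twisted_prod_def using tp_respect[OF psi_zero] by simp

lemma tp_add_left: "tp (x + y) b = tp x b + tp y b"
  unfolding twisted_prod_def using tp_respect[OF psi_add] by simp

lemma tp_sum_left: "tp (\<Sum>x\<leftarrow>l. f x) b = (\<Sum>x\<leftarrow>l. tp (f x) b)"
  by (induction l) (auto simp: tp_zero_left tp_add_left)

lemma tp_zero_right: "tp a 0 = 0"
  unfolding twisted_prod_def by (simp add: pi_zero case_prod_unfold)

lemma tp_add_right: "tp a (x + y) = tp a x + tp a y"
  unfolding twisted_prod_def by (simp add: pi_add distrib_left case_prod_unfold sum_list_addf)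

lemma tp_sum_right: "tp a (\<Sum>x\<leftarrow>l. f x) = (\<Sum>x\<leftarrow>l. tp a (f x))"
  by (induction l) (auto simp: tp_zero_right tp_add_right)

lemma pi_mult_N: assumes "n' \<in> N" shows "\<pi> g (m' * n') = \<pi> g m' * n'"
proof -
  have "\<pi> g (m' * n') = (\<Sum>(g1, g2)\<leftarrow>\<Delta> g. sA (\<epsilon> g2) (\<pi> g1 m') * n')"
    using assms by (simp add: pi_mult N_iff sA_mult(2)[symmetric] sA_mult(1))
  also have "\<dots> = (\<Sum>(g1, g2)\<leftarrow>\<Delta> g. sA (\<epsilon> g2) (\<pi> g1 m')) * n'"
    by (simp add: sum_list_mult_left case_prod_unfold)
  also have "(\<Sum>(g1, g2)\<leftarrow>\<Delta> g. sA (\<epsilon> g2) (\<pi> g1 m')) = \<pi> (\<Sum>(g1, g2)\<leftarrow>\<Delta> g. sH (\<epsilon> g2) g1) m'"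
    by (simp add: pi_sumH case_prod_unfold pi_scH)
  also have "(\<Sum>(g1, g2)\<leftarrow>\<Delta> g. sH (\<epsilon> g2) g1) = g" by (rule counitR)
  finally show ?thesis .
qed

lemma twist_single:
  assumes Hp: "\<forall>a\<in>N. set (\<psi>' a) \<subseteq> UNIV \<times> N \<and> tensor2_eq sH sA UNIV UNIV (\<psi>' a) (\<psi> a)"
    and comm: "\<forall>a\<in>C. \<forall>b\<in>N. a * b = b * a"
    and m: "m \<in> C" and n: "n \<in> N" and m': "m' \<in> C" and n': "n' \<in> N"
  shows "tp (m * n) (m' * n') = (\<Sum>(g, c)\<leftarrow>\<psi>' n. m * \<pi> g m' * (c * n'))"
proof -
  have hs: "set (\<psi>' n) \<subseteq> UNIV \<times> N" using Hp n by blast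
  have hr': "sc_rel R2 1 (\<psi> n) (\<psi>' n)" using Hp n by (simp add: tensor2_UNIV sc_rel_sym)
  have "sc_rel R2 1 (\<psi> (m * n)) (prodL (\<psi> m) (\<psi> n))" by (rule psi_mult)
  also have "sc_rel R2 1 (prodL (\<psi> m) (\<psi> n)) (prodL [(1, m)] (\<psi>' n))"
    using m hr' unfolding C_iff by (rule prodL_cong)
  finally have T: "sc_rel R2 1 (\<psi> (m * n)) (map (\<lambda>(g, b). (g, m * b)) (\<psi>' n))"
    by (simp add: prodL_def)
  have "tp (m * n) (m' * n') = (\<Sum>(g, c)\<leftarrow>map (\<lambda>(g, b). (g, m * b)) (\<psi>' n). c * \<pi> g (m' * n'))"
    unfolding twisted_prod_def by (rule tp_respect[OF T])
  also have "\<dots> = (\<Sum>(g, b)\<leftarrow>\<psi>' n. (m * b) * (\<pi> g m' * n'))"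
    using n' by (simp add: pi_mult_N case_prod_unfold o_def)
  also have "\<dots> = (\<Sum>(g, c)\<leftarrow>\<psi>' n. m * \<pi> g m' * (c * n'))"
  proof (rule sum_list_cong2)
    fix x assume x: "x \<in> set (\<psi>' n)"
    obtain g b where xb: "x = (g, b)" by force
    have bN: "b \<in> N" using hs x xb by auto
    have "\<pi> g m' \<in> C" using m' by (rule C_pi)
    then have eq: "\<pi> g m' * b = b * \<pi> g m'" using comm bN by blast
    then have "m * b * (\<pi> g m' * n') = m * (b * \<pi> g m') * n'" by (simp add: mult.assoc)
    also have "\<dots> = m * (\<pi> g m' * b) * n'" using eq by simp
    also have "\<dots> = m * \<pi> g m' * (b * n')" by (simp add: mult.assoc)
    finally show "(\<lambda>(g, b). (m * b) * (\<pi> g m' * n')) x = (\<lambda>(g, c). m * \<pi> g m' * (c * n')) x"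
      by (simp add: xb)
  qed
  finally show ?thesis .
qed

lemma sum_list_concat': "sum_list (concat xss) = sum_list (map sum_list (xss :: 'b::monoid_add list list))"
  by (induction xss) auto

lemma mult_map_concat: "mult_map (concat L) = (\<Sum>l\<leftarrow>L. mult_map l)"
  by (induction L) (auto simp: mult_map_def)

lemma twist_main:
  assumes Hp: "\<forall>a\<in>N. set (\<psi>' a) \<subseteq> UNIV \<times> N \<and> tensor2_eq sH sA UNIV UNIV (\<psi>' a) (\<psi> a)"
    and comm: "\<forall>a\<in>C. \<forall>b\<in>N. a * b = b * a"
    and xs: "set xs \<subseteq> C \<times> N" and ys: "set ys \<subseteq> C \<times> N"
  shows "mult_map (smash_mult \<pi> \<psi>' xs ys) = tp (mult_map xs) (mult_map ys)"
proof -
  have L: "mult_map (smash_mult \<pi> \<psi>' xs ys) = (\<Sum>(m, n)\<leftarrow>xs. \<Sum>(m', n')\<leftarrow>ys. \<Sum>(g, c)\<leftarrow>\<psi>' n. m * \<pi> g m' * (c * n'))"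
    unfolding smash_mult_def mult_map_concat
    by (simp add: mult_map_def[abs_def] case_prod_unfold o_def map_concat sum_list_concat')
  have "tp (mult_map xs) (mult_map ys) = (\<Sum>(m, n)\<leftarrow>xs. \<Sum>(m', n')\<leftarrow>ys. tp (m * n) (m' * n'))"
    unfolding mult_map_def by (simp only: tp_sum_left) (simp add: tp_sum_right case_prod_unfold)
  also have "\<dots> = (\<Sum>(m, n)\<leftarrow>xs. \<Sum>(m', n')\<leftarrow>ys. \<Sum>(g, c)\<leftarrow>\<psi>' n. m * \<pi> g m' * (c * n'))"
  proof (rule sum_list_cong2)
    fix x assume x: "x \<in> set xs"
    obtain m n where xm: "x = (m, n)" by force
    have mn: "m \<in> C" "n \<in> N" using x xm xs by auto
    show "(\<lambda>(m, n). \<Sum>(m', n')\<leftarrow>ys. tp (m * n) (m' * n')) x = (\<lambda>(m, n). \<Sum>(m', n')\<leftarrow>ys. \<Sum>(g, c)\<leftarrow>\<psi>' n. m * \<pi> g m' * (c * n')) x"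
      unfolding xm split
    proof (rule sum_list_cong2)
      fix y assume y: "y \<in> set ys"
      obtain m' n' where ym: "y = (m', n')" by force
      have mn': "m' \<in> C" "n' \<in> N" using y ym ys by auto
      show "(\<lambda>(m', n'). tp (m * n) (m' * n')) y = (\<lambda>(m', n'). \<Sum>(g, c)\<leftarrow>\<psi>' n. m * \<pi> g m' * (c * n')) y"
        unfolding ym split by (rule twist_single[OF Hp comm mn mn'])
    qed
  qed
  finally show ?thesis using L by simp
qed

end


theorem proposition4p9:
  fixes sH :: "'k::field \<Rightarrow> 'h::ring_1 \<Rightarrow> 'h"
    and sA :: "'k \<Rightarrow> 'a::ring_1 \<Rightarrow> 'a"
    and \<Delta> :: "'h \<Rightarrow> ('h \<times> 'h) list"
    and \<epsilon> :: "'h \<Rightarrow> 'k"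
    and \<pi> :: "'h \<Rightarrow> 'a \<Rightarrow> 'a"
    and \<psi> :: "'a \<Rightarrow> ('h \<times> 'a) list"
  assumes tw: "left_twisting_datum sH \<Delta> \<epsilon> sA \<pi> \<psi>"
  shows
    "subalgebra sA (invariants sA \<epsilon> \<pi>)
     \<and> (\<exists>\<psi>'. \<forall>a\<in>invariants sA \<epsilon> \<pi>. set (\<psi>' a) \<subseteq> UNIV \<times> invariants sA \<epsilon> \<pi>
                \<and> tensor2_eq sH sA UNIV UNIV (\<psi>' a) (\<psi> a))
     \<and> (\<forall>\<psi>'. (\<forall>a\<in>invariants sA \<epsilon> \<pi>. set (\<psi>' a) \<subseteq> UNIV \<times> invariants sA \<epsilon> \<pi>
                \<and> tensor2_eq sH sA UNIV UNIV (\<psi>' a) (\<psi> a))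
            \<longrightarrow> comodule_algebra sH \<Delta> \<epsilon> sA (invariants sA \<epsilon> \<pi>) \<psi>')
     \<and> subalgebra sA (coinvariants sH sA \<psi>)
     \<and> module_algebra sH \<Delta> \<epsilon> sA (coinvariants sH sA \<psi>) \<pi>
     \<and> ((\<forall>a\<in>coinvariants sH sA \<psi>. \<forall>b\<in>invariants sA \<epsilon> \<pi>. a * b = b * a) \<longrightarrow>
          (\<forall>\<psi>'. (\<forall>a\<in>invariants sA \<epsilon> \<pi>. set (\<psi>' a) \<subseteq> UNIV \<times> invariants sA \<epsilon> \<pi>
                    \<and> tensor2_eq sH sA UNIV UNIV (\<psi>' a) (\<psi> a))
             \<longrightarrow> (\<forall>xs ys. tensor2_eq sA sA (coinvariants sH sA \<psi>) (invariants sA \<epsilon> \<pi>) xs ys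
                          \<longrightarrow> mult_map xs = mult_map ys)
               \<and> mult_map [(1, 1)] = 1
               \<and> (\<forall>xs ys. set xs \<subseteq> coinvariants sH sA \<psi> \<times> invariants sA \<epsilon> \<pi>
                     \<longrightarrow> set ys \<subseteq> coinvariants sH sA \<psi> \<times> invariants sA \<epsilon> \<pi>
                     \<longrightarrow> mult_map (smash_mult \<pi> \<psi>' xs ys)
                         = twisted_prod \<pi> \<psi> (mult_map xs) (mult_map ys))))"
proof -
  interpret twd sH sA \<Delta> \<epsilon> \<pi> \<psi> by (rule twd.intro[OF tw])
  have p1: "\<forall>xs ys. tensor2_eq sA sA (coinvariants sH sA \<psi>) (invariants sA \<epsilon> \<pi>) xs ys \<longrightarrow> mult_map xs = mult_map ys"
    using mult_map_wd by blast
  have p2: "mult_map [(1::'a, 1)] = 1" by (simp add: mult_map_def)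
  have p3: "\<forall>xs ys. set xs \<subseteq> coinvariants sH sA \<psi> \<times> invariants sA \<epsilon> \<pi>
                     \<longrightarrow> set ys \<subseteq> coinvariants sH sA \<psi> \<times> invariants sA \<epsilon> \<pi>
                     \<longrightarrow> mult_map (smash_mult \<pi> \<psi>' xs ys)
                         = twisted_prod \<pi> \<psi> (mult_map xs) (mult_map ys)"
    if comm: "\<forall>a\<in>coinvariants sH sA \<psi>. \<forall>b\<in>invariants sA \<epsilon> \<pi>. a * b = b * a"
      and Hp: "\<forall>a\<in>invariants sA \<epsilon> \<pi>. set (\<psi>' a) \<subseteq> UNIV \<times> invariants sA \<epsilon> \<pi> \<and> tensor2_eq sH sA UNIV UNIV (\<psi>' a) (\<psi> a)"
    for \<psi>'
    using twist_main[OF Hp comm] by blast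
  show ?thesis
    apply (intro conjI allI impI)
    subgoal by (rule N_subalgebra)
    subgoal by (rule psi'_exists)
    subgoal by (erule comod_N)
    subgoal by (rule C_subalgebra)
    subgoal by (rule C_module)
    subgoal using p1 by blast
    subgoal by (simp add: mult_map_def)
    subgoal for \<psi>' xs ys using p3[of \<psi>'] by blast
    done
qed


end
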